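(* Let $\gamma>1$ be a real number such that $\gamma\ne\psi_L^r$ for every $r\in\mathbb{Q}$ and every admissible tuple $L$, where $\psi_L$ is the dominant zero associated with $L$. Let $K_n=\lfloor\gamma^n\rfloor$. Then $K$ satisfies absolute Benford's Law.
   Context: An admissible tuple is $L=(a_1,\dots,a_N)\in\mathbb{N}_0^N$ with $N\ge2$, $a_1>0$; $\psi_L$ is the unique positive real zero of $x^N-\sum_{k=1}^{N-1}a_kx^{N-k}-(1+a_N)$ and $\theta=\psi_L^{-1}$. For such $L$: $\Theta=(a_1,\dots,a_N,a_1,\dots,a_N,\dots)$; $\mathcal H^\circ$ is the set of finite tuples $\epsilon$ (length $n$, empty tuple included) such that either $\epsilon=\Theta|n$ or there is $0\le s<n$ with $(\epsilon(1),\dots,\epsilon(s))=\Theta|s$, $\epsilon(s+1)<\Theta(s+1)$ and $(\epsilon(s+2),\dots,\epsilon(n))\in\mathcal H^\circ$; $\mathcal H=\{\epsilon\in\mathcal H^\circ:\epsilon(1)>0\}$. $H$: $H_n=1+\sum_{k=1}^{n-1}a_kH_{n-k}$ ($1\le n\le N+1$), $H_{n+N}=a_1H_{n+N-1}+\dots+a_{N-1}H_{n+1}+(1+a_N)H_n$; each $m\in\mathbb{N}$ is uniquely $m=\sum_{k=1}^M\epsilon(k)H_{M-k+1}$ with $\epsilon\in\mathcal H$ of length $M$. $\mathrm{LB}_s(m)$ is $(\epsilon(1),\dots,\epsilon(s))$ if $N\le s\le M$, $(\epsilon(1),\dots,\epsilon(s),0,\dots,0)$ (length $N$) if $s<N$,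 $s\le M$, undefined if $s>M$. $\mathcal H_s$: the set of values of $\mathrm{LB}_s$, listed $\mathbf b_1,\dots,\mathbf b_\ell$ lexicographically; exclusive block $\mathbf b_{\ell+1}$: if $s\ge N$, $s\equiv p\pmod N$, $0\le p<N$, its first $s-p$ entries are $\Theta|(s-p)$ with the last of these replaced by $1+a_N$ and its last $p$ entries are $0$; if $s<N$, $\mathbf b_{\ell+1}=(a_1,\dots,a_{N-1},1+a_N)$; $\widetilde{\mathbf b_k}=\mathbf b_{k+1}$; $\mathbf b\cdot\widehat H=\sum_k\mathbf b(k)\theta^{k-1}$. $K$ satisfies strong Benford's Law under $\mathcal H$-expansion if for all $s\in\mathbb{N}$ and $\mathbf b\in\mathcal H_s$, $\lim_n\#\{k\le n:\mathrm{LB}_s(K_k)=\mathbf b\}/n=\log_{\psi_L}(\widetilde{\mathbf b}\cdot\widehat H/\mathbf b\cdot\widehat H)$. $K$ satisfies absolute Benford's Law if it satisfies strong Benford's Law under $\mathcal H$-expansion for every admissible $L$. *)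

theory Defs
  imports Complex_Main "HOL-Library.List_Lexorder"
begin

text \<open>An admissible tuple L = (a_1,...,a_N) is a list of naturals with a_k = L ! (k-1).\<close>

definition admissible :: "nat list \<Rightarrow> bool" where
  "admissible L \<longleftrightarrow> length L \<ge> 2 \<and> L ! 0 > 0"

definition psiL :: "nat list \<Rightarrow> real" where
  "psiL L = (THE x. x > 0 \<and>
     x ^ length L - (\<Sum>k=1..length L - 1. real (L ! (k - 1)) * x ^ (length L - k))
       - (1 + real (L ! (length L - 1))) = 0)"

definition thetaL :: "nat list \<Rightarrow> real" where
  "thetaL L = inverse (psiL L)"

text \<open>Theta = (a_1,...,a_N,a_1,...,a_N,...), 1-based: Theta(k) for k \<ge> 1.\<close>
definition Theta :: "nat list \<Rightarrow> nat \<Rightarrow> nat" where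
  "Theta L k = L ! ((k - 1) mod length L)"

definition Theta_pref :: "nat list \<Rightarrow> nat \<Rightarrow> nat list" where
  "Theta_pref L n = map (Theta L) [1..<Suc n]"

inductive_set Hcirc :: "nat list \<Rightarrow> nat list set" for L :: "nat list" where
  full: "Theta_pref L n \<in> Hcirc L"
| step: "\<lbrakk> c < Theta L (Suc s); rest \<in> Hcirc L \<rbrakk>
          \<Longrightarrow> Theta_pref L s @ c # rest \<in> Hcirc L"

definition Hset :: "nat list \<Rightarrow> nat list set" where
  "Hset L = {e \<in> Hcirc L. e \<noteq> [] \<and> e ! 0 > 0}"

text \<open>The fundamental sequence H_1, H_2, ...: Hlist L m = [H_1, ..., H_m].\<close>
primrec Hlist :: "nat list \<Rightarrow> nat \<Rightarrow> nat list" where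
  "Hlist L 0 = []"
| "Hlist L (Suc m) =
     (let prev = Hlist L m; n = Suc m; N = length L in
      prev @ [if n \<le> N + 1
              then 1 + (\<Sum>k=1..n - 1. L ! (k - 1) * prev ! (n - k - 1))
              else (\<Sum>k=1..N - 1. L ! (k - 1) * prev ! (n - k - 1))
                   + (1 + L ! (N - 1)) * prev ! (n - N - 1)])"

definition Hseq :: "nat list \<Rightarrow> nat \<Rightarrow> nat" where
  "Hseq L n = Hlist L n ! (n - 1)"

definition Hexp :: "nat list \<Rightarrow> nat \<Rightarrow> nat list" where
  "Hexp L m = (THE e. e \<in> Hset L \<and>
      m = (\<Sum>k=1..length e. e ! (k - 1) * Hseq L (length e - k + 1)))"

text \<open>Leading block LB_s(m); None means undefined.\<close>
definition LB :: "nat list \<Rightarrow> nat \<Rightarrow> nat \<Rightarrow> nat list option" where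
  "LB L s m = (let e = Hexp L m; M = length e; N = length L in
     if s > M then None
     else if N \<le> s then Some (take s e)
     else Some (take s e @ replicate (N - s) 0))"

definition Hs :: "nat list \<Rightarrow> nat \<Rightarrow> nat list set" where
  "Hs L s = {b. \<exists>m \<ge> 1. LB L s m = Some b}"

definition excl_block :: "nat list \<Rightarrow> nat \<Rightarrow> nat list" where
  "excl_block L s = (let N = length L in
     if N \<le> s then
       (let p = s mod N in
        butlast (Theta_pref L (s - p)) @ [1 + L ! (N - 1)] @ replicate p 0)
     else butlast L @ [1 + L ! (N - 1)])"

definition next_block :: "nat list \<Rightarrow> nat \<Rightarrow> nat list \<Rightarrow> nat list" where
  "next_block L s b = (if {b' \<in> Hs L s. b < b'} \<noteq> {}
                        then Min {b' \<in> Hs L s. b < b'} else excl_block L s)"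

definition dotH :: "nat list \<Rightarrow> nat list \<Rightarrow> real" where
  "dotH L b = (\<Sum>k<length b. real (b ! k) * thetaL L ^ k)"

definition strong_benford :: "nat list \<Rightarrow> (nat \<Rightarrow> nat) \<Rightarrow> bool" where
  "strong_benford L K \<longleftrightarrow>
     (\<forall>s \<ge> 1. \<forall>b \<in> Hs L s.
        (\<lambda>n. real (card {k \<in> {1..n}. LB L s (K k) = Some b}) / real n)
          \<longlonglongrightarrow> log (psiL L) (dotH L (next_block L s b) / dotH L b))"

definition absolute_benford :: "(nat \<Rightarrow> nat) \<Rightarrow> bool" where
  "absolute_benford K \<longleftrightarrow> (\<forall>L. admissible L \<longrightarrow> strong_benford L K)"

end

theory Submission
  imports Defs "HOL-Analysis.Kronecker_Approximation_Theorem"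
begin


lemma Hlist_length[simp]: "length (Hlist L m) = m"
  by (induction m) (auto simp: Let_def)

lemma Hlist_prefix: "m \<le> m' \<Longrightarrow> take m (Hlist L m') = Hlist L m"
proof (induction m' arbitrary: m)
  case 0 then show ?case by simp
next
  case (Suc m')
  show ?case
  proof (cases "m = Suc m'")
    case True then show ?thesis by (metis Hlist_length order.refl take_all)
  next
    case False
    then have "m \<le> m'" using Suc by simp
    then show ?thesis using Suc.IH[of m] by (simp add: Let_def)
  qed
qed

lemma Hlist_nth: "i < m \<Longrightarrow> Hlist L m ! i = Hseq L (Suc i)"
proof -
  assume "i < m"
  have "Hlist L m ! i = take (Suc i) (Hlist L m) ! i" by simp
  also have "\<dots> = Hlist L (Suc i) ! i" using \<open>i < m\<close> Hlist_prefix[of "Suc i" m L] by simp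
  finally show ?thesis by (simp add: Hseq_def)
qed

lemma Hseq_Suc_aux: "1 \<le> k \<Longrightarrow> k \<le> m \<Longrightarrow> Hlist L m ! (Suc m - k - 1) = Hseq L (Suc m - k)"
  by (subst Hlist_nth) (auto simp: Suc_diff_le)

lemma Hseq_Suc0: "Hseq L (Suc m) = (let prev = Hlist L m; n = Suc m; N = length L in
      (if n \<le> N + 1
              then 1 + (\<Sum>k=1..n - 1. L ! (k - 1) * prev ! (n - k - 1))
              else (\<Sum>k=1..N - 1. L ! (k - 1) * prev ! (n - k - 1))
                   + (1 + L ! (N - 1)) * prev ! (n - N - 1)))"
proof -
  have e: "(xs @ [x]) ! (Suc m - 1) = x" if "length xs = m" for xs :: "nat list" and x
    using that by (simp add: nth_append)
  show ?thesis unfolding Hseq_def Hlist.simps(2) Let_def by (rule e) simp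
qed

lemma Hseq_Suc1: "Suc m \<le> length L + 1 \<Longrightarrow>
   Hseq L (Suc m) = 1 + (\<Sum>k=1..m. L ! (k - 1) * Hseq L (Suc m - k))"
proof -
  assume a: "Suc m \<le> length L + 1"
  have "(\<Sum>k=1..m. L!(k-1) * Hlist L m ! (Suc m - k - 1)) = (\<Sum>k=1..m. L!(k-1) * Hseq L (Suc m - k))"
    by (rule sum.cong) (auto simp only: Hseq_Suc_aux atLeastAtMost_iff)
  then show ?thesis using a unfolding Hseq_Suc0 Let_def by (simp only: if_True diff_Suc_1)
qed

lemma Hseq_Suc2: "length L > 0 \<Longrightarrow> \<not> Suc m \<le> length L + 1 \<Longrightarrow>
   Hseq L (Suc m) = (\<Sum>k=1..length L - 1. L ! (k - 1) * Hseq L (Suc m - k))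
                   + (1 + L ! (length L - 1)) * Hseq L (Suc m - length L)"
proof -
  assume a: "\<not> Suc m \<le> length L + 1" and L0: "length L > 0"
  assume "\<not> Suc m \<le> length L + 1"
  have "(\<Sum>k=1..length L - 1. L!(k-1) * Hlist L m ! (Suc m - k - 1)) = (\<Sum>k=1..length L - 1. L!(k-1) * Hseq L (Suc m - k))"
    by (rule sum.cong) (use a in \<open>auto simp only: Hseq_Suc_aux atLeastAtMost_iff\<close>)
  moreover have "Hlist L m ! (Suc m - length L - 1) = Hseq L (Suc m - length L)"
    using a L0 by (subst Hlist_nth) (auto simp: Suc_diff_le)
  ultimately show ?thesis using a unfolding Hseq_Suc0 Let_def by (simp only: if_False)
qed

lemma sum_split_add: "(\<Sum>i<m+n. f i) = (\<Sum>i<m. f i) + (\<Sum>i<n. f (m+i))" for m n :: nat and f :: "nat \<Rightarrow> 'a::comm_monoid_add"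
  by (induction n) (auto simp: add.assoc)

locale adm =
  fixes L :: "nat list"
  assumes adm: "admissible L"
begin

abbreviation "N \<equiv> length L"
definition th :: "nat \<Rightarrow> nat" where "th i = L ! (i mod N)"
abbreviation H where "H \<equiv> Hseq L"

lemma N2: "N \<ge> 2" using adm by (simp add: admissible_def)
lemma Npos: "N > 0" using N2 by fastforce
lemma th0: "th 0 > 0" using adm by (simp add: admissible_def th_def)
lemma th_less: "i < N \<Longrightarrow> th i = L ! i" by (simp add: th_def)
lemma th_add: "th (N + i) = th i" by (simp add: th_def)

lemma H_I: "H (Suc n) = 1 + (\<Sum>i<n. th i * H (n - i))"
proof (induction n rule: less_induct)
  case (less n)
  show ?case
  proof (cases "Suc n \<le> N + 1")
    case True
    have "H (Suc n) = 1 + (\<Sum>k=1..n. L ! (k - 1) * H (Suc n - k))" using True by (rule Hseq_Suc1)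
    also have "\<dots> = 1 + (\<Sum>i<n. th i * H (n - i))"
      unfolding One_nat_def sum.atLeast1_atMost_eq using True by (auto simp: th_less intro!: sum.cong)
    finally show ?thesis .
  next
    case False
    define t where "t = n - N"
    have t: "n = N + t" using False unfolding t_def by simp
    have Hs: "H (Suc n) = (\<Sum>k=1..N - 1. L ! (k - 1) * H (Suc n - k)) + (1 + L ! (N - 1)) * H (Suc n - N)"
      using False Npos by (rule Hseq_Suc2[rotated])
    have t1: "t < n" using t Npos by simp
    have IH: "H (Suc t) = 1 + (\<Sum>i<t. th i * H (t - i))" using less[OF t1] .
    have e1: "(\<Sum>k=1..N - 1. L ! (k - 1) * H (Suc n - k)) = (\<Sum>i<N - 1. th i * H (n - i))"
    proof -
      have "(\<Sum>k=1..N - 1. L ! (k - 1) * H (Suc n - k)) = (\<Sum>i<N-1. L ! i * H (n - i))"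
        unfolding One_nat_def sum.atLeast1_atMost_eq by simp
      also have "\<dots> = (\<Sum>i<N - 1. th i * H (n - i))" by (auto simp: th_less intro!: sum.cong)
      finally show ?thesis .
    qed
    have e2: "(\<Sum>i<N. th i * H (n - i)) = (\<Sum>i<N - 1. th i * H (n - i)) + L ! (N - 1) * H (Suc t)"
    proof -
      have "{..<N} = insert (N - 1) {..<N - 1}" using Npos by auto
      then have "(\<Sum>i<N. th i * H (n - i)) = (\<Sum>i<N - 1. th i * H (n - i)) + th (N - 1) * H (n - (N - 1))"
        by simp
      moreover have "n - (N - 1) = Suc t" using t N2 by arith
      ultimately show ?thesis using Npos by (simp add: th_less)
    qed
    have "(\<Sum>i<n. th i * H (n - i)) = (\<Sum>i<N. th i * H (n - i)) + (\<Sum>i<t. th (N + i) * H (n - (N + i)))"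
      unfolding t by (rule sum_split_add)
    also have "(\<Sum>i<t. th (N + i) * H (n - (N + i))) = (\<Sum>i<t. th i * H (t - i))"
      by (auto simp: th_add t intro!: sum.cong)
    finally have "(\<Sum>i<n. th i * H (n - i)) = (\<Sum>i<N - 1. th i * H (n - i)) + L ! (N - 1) * H (Suc t) + (H (Suc t) - 1)"
      using e2 IH by simp
    moreover have "Suc n - N = Suc t" using t by simp
    moreover have "H (Suc t) \<ge> 1" using IH by simp
    ultimately show ?thesis using Hs e1 by simp
  qed
qed

lemma H_pos: "H (Suc n) \<ge> 1" using H_I[of n] by simp

lemma H_Suc_ge: "H (Suc (Suc n)) \<ge> H (Suc n) + 1"
proof -
  have "H (Suc (Suc n)) = 1 + (\<Sum>i<Suc n. th i * H (Suc n - i))" by (rule H_I)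
  also have "(\<Sum>i<Suc n. th i * H (Suc n - i)) \<ge> th 0 * H (Suc n)"
    using member_le_sum[of 0 "{..<Suc n}" "\<lambda>i. th i * H (Suc n - i)"] by simp
  moreover have "th 0 * H (Suc n) \<ge> H (Suc n)" using th0 by simp
  ultimately show ?thesis by linarith
qed

lemma H_strict_mono: "1 \<le> m \<Longrightarrow> m < n \<Longrightarrow> H m < H n"
proof (induction n)
  case 0 then show ?case by simp
next
  case (Suc n)
  then obtain k where k: "n = Suc k" by (cases n) auto
  have "H n < H (Suc n)" using H_Suc_ge[of k] k by simp
  then show ?case using Suc by (cases "m = n") auto
qed

lemma H_mono: "1 \<le> m \<Longrightarrow> m \<le> n \<Longrightarrow> H m \<le> H n"
  using H_strict_mono by (cases "m = n") (auto intro: less_imp_le)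

lemma H_1: "H 1 = 1" using H_I[of 0] by simp

lemma H_ge_n: "H (Suc n) \<ge> Suc n"
proof (induction n)
  case 0 then show ?case using H_1 by simp
next
  case (Suc n) then show ?case using H_Suc_ge[of n] by linarith
qed

end


context adm
begin

inductive Hc :: "nat \<Rightarrow> nat list \<Rightarrow> bool" where
  Hc_nil: "Hc j []"
| Hc_low: "c < th j \<Longrightarrow> Hc 0 r \<Longrightarrow> Hc j (c # r)"
| Hc_top: "Hc (Suc j) r \<Longrightarrow> Hc j (th j # r)"

lemma Theta_pref_th: "Theta_pref L n = map th [0..<n]"
proof -
  have "Theta_pref L n = map (Theta L) (map Suc [0..<n])"
    unfolding Theta_pref_def by (simp add: map_Suc_upt)
  also have "\<dots> = map th [0..<n]" by (simp add: Theta_def th_def)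
  finally show ?thesis .
qed

lemma Theta_th: "Theta L (Suc s) = th s" by (simp add: Theta_def th_def)

lemma Hc_top_map: "Hc j (map th [j..<j+n])"
proof (induction n arbitrary: j)
  case 0 then show ?case by (simp add: Hc_nil)
next
  case (Suc n)
  have "[j..<j + Suc n] = j # [Suc j..<Suc j + n]" by (simp add: upt_conv_Cons del: upt_Suc)
  then show ?case using Suc[of "Suc j"] by (simp add: Hc_top)
qed

lemma Hc_step_map: "c < th (j+s) \<Longrightarrow> Hc 0 r \<Longrightarrow> Hc j (map th [j..<j+s] @ c # r)"
proof (induction s arbitrary: j)
  case 0 then show ?case by (simp add: Hc_low)
next
  case (Suc s)
  have "[j..<j + Suc s] = j # [Suc j..<Suc j + s]" by (simp add: upt_conv_Cons del: upt_Suc)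
  then show ?case using Suc.IH[of "Suc j"] Suc.prems by (simp add: Hc_top)
qed

lemma Hcirc_Hc: "e \<in> Hcirc L \<Longrightarrow> Hc 0 e"
proof (induction rule: Hcirc.induct)
  case (full n) then show ?case using Hc_top_map[of 0 n] by (simp add: Theta_pref_th)
next
  case (step c s rest) then show ?case using Hc_step_map[of c 0 s rest] by (simp add: Theta_pref_th Theta_th)
qed

lemma Hc_Hcirc_aux: "Hc j e \<Longrightarrow> e = map th [j..<j+length e] \<or>
   (\<exists>s c r. e = map th [j..<j+s] @ c # r \<and> c < th (j+s) \<and> r \<in> Hcirc L)"
proof (induction rule: Hc.induct)
  case (Hc_nil j) then show ?case by simp
next
  case (Hc_low c j r)
  have "r \<in> Hcirc L"
    using Hc_low.IH
  proof
    assume "r = map th [0..<0 + length r]"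
    then show ?thesis using Hcirc.full[of L "length r"] by (simp add: Theta_pref_th)
  next
    assume "\<exists>s c r'. r = map th [0..<0 + s] @ c # r' \<and> c < th (0 + s) \<and> r' \<in> Hcirc L"
    then obtain s c' r' where "r = map th [0..<s] @ c' # r'" "c' < th s" "r' \<in> Hcirc L" by auto
    then show ?thesis using Hcirc.step[of c' L s r'] by (simp add: Theta_pref_th Theta_th)
  qed
  then show ?case using Hc_low.hyps(1) by (intro disjI2 exI[of _ 0] exI[of _ c] exI[of _ r]) simp
next
  case (Hc_top j r)
  have u: "[j..<j + Suc k] = j # [Suc j..<Suc j + k]" for k by (simp add: upt_conv_Cons del: upt_Suc)
  from Hc_top.IH show ?case
  proof
    assume "r = map th [Suc j..<Suc j + length r]"
    then show ?thesis using u[of "length r"] by (simp del: upt_Suc)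
  next
    assume "\<exists>s c r'. r = map th [Suc j..<Suc j + s] @ c # r' \<and> c < th (Suc j + s) \<and> r' \<in> Hcirc L"
    then obtain s c r' where "r = map th [Suc j..<Suc j + s] @ c # r'" "c < th (Suc j + s)" "r' \<in> Hcirc L" by auto
    then have "th j # r = map th [j..<j + Suc s] @ c # r'" "c < th (j + Suc s)"
      using u[of s] by (simp_all del: upt_Suc)
    then show ?thesis using \<open>r' \<in> Hcirc L\<close> by blast
  qed
qed

lemma Hc_Hcirc: "Hc 0 e \<Longrightarrow> e \<in> Hcirc L"
proof -
  assume "Hc 0 e"
  from Hc_Hcirc_aux[OF this] show ?thesis
  proof
    assume "e = map th [0..<0 + length e]"
    then show ?thesis using Hcirc.full[of L "length e"] by (simp add: Theta_pref_th)
  next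
    assume "\<exists>s c r'. e = map th [0..<0 + s] @ c # r' \<and> c < th (0 + s) \<and> r' \<in> Hcirc L"
    then obtain s c' r' where "e = map th [0..<s] @ c' # r'" "c' < th s" "r' \<in> Hcirc L" by auto
    then show ?thesis using Hcirc.step[of c' L s r'] by (simp add: Theta_pref_th Theta_th)
  qed
qed

lemma Hcirc_iff: "e \<in> Hcirc L \<longleftrightarrow> Hc 0 e"
  using Hc_Hcirc Hcirc_Hc by blast

fun vl :: "nat list \<Rightarrow> nat" where
  "vl [] = 0"
| "vl (x # xs) = x * H (Suc (length xs)) + vl xs"

lemma vl_sum: "vl e = (\<Sum>k=1..length e. e ! (k - 1) * H (length e - k + 1))"
proof (induction e)
  case Nil then show ?case by simp
next
  case (Cons x xs)
  have "(\<Sum>k=1..length (x#xs). (x#xs) ! (k - 1) * H (length (x#xs) - k + 1))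
      = (\<Sum>k<Suc (length xs). (x#xs) ! k * H (length xs - k + 1))"
    unfolding One_nat_def sum.atLeast1_atMost_eq by simp
  also have "\<dots> = x * H (Suc (length xs)) + (\<Sum>k<length xs. xs ! k * H (length xs - Suc k + 1))"
    by (subst sum.lessThan_Suc_shift) simp
  also have "(\<Sum>k<length xs. xs ! k * H (length xs - Suc k + 1)) = (\<Sum>k=1..length xs. xs ! (k - 1) * H (length xs - k + 1))"
    unfolding One_nat_def sum.atLeast1_atMost_eq by simp
  finally show ?case using Cons by simp
qed

definition G :: "nat \<Rightarrow> nat \<Rightarrow> nat" where "G j n = vl (map th [j..<j+n]) + 1"

lemma G_Suc: "G j (Suc n) = th j * H (Suc n) + G (Suc j) n"
proof -
  have "[j..<j + Suc n] = j # [Suc j..<Suc j + n]" by (simp add: upt_conv_Cons del: upt_Suc)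
  then show ?thesis by (simp add: G_def del: upt_Suc)
qed

lemma vl_map_th: "vl (map th [j..<j+n]) = (\<Sum>i<n. th (j+i) * H (n - i))"
proof (induction n arbitrary: j)
  case 0 then show ?case by simp
next
  case (Suc n)
  have "[j..<j + Suc n] = j # [Suc j..<Suc j + n]" by (simp add: upt_conv_Cons del: upt_Suc)
  then have "vl (map th [j..<j + Suc n]) = th j * H (Suc n) + (\<Sum>i<n. th (Suc j+i) * H (n - i))"
    using Suc[of "Suc j"] by (simp del: upt_Suc)
  also have "\<dots> = (\<Sum>i<Suc n. th (j+i) * H (Suc n - i))"
    by (subst sum.lessThan_Suc_shift) simp
  finally show ?case .
qed

lemma G0: "G 0 n = H (Suc n)"
  unfolding G_def using vl_map_th[of 0 n] H_I[of n] by simp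

lemma Hc_lt: "Hc j e \<Longrightarrow> vl e < G j (length e)"
proof (induction rule: Hc.induct)
  case (Hc_nil j) then show ?case by (simp add: G_def)
next
  case (Hc_low c j r)
  have "vl (c # r) < (c + 1) * H (Suc (length r))" using Hc_low.IH G0 by simp
  also have "\<dots> \<le> th j * H (Suc (length r))" using Hc_low.hyps(1) by (intro mult_right_mono) auto
  also have "\<dots> < G j (length (c # r))" using G_Suc[of j "length r"] G0 by (simp add: G_def)
  finally show ?case .
next
  case (Hc_top j r)
  then show ?case using G_Suc[of j "length r"] by simp
qed

lemma lt_comb: "v < h \<Longrightarrow> x < x' \<Longrightarrow> x * h + v < x' * h + (v'::nat)"
proof -
  assume "v < h" "x < x'"
  then have "x * h + v < (x + 1) * h" by simp
  also have "\<dots> \<le> x' * h" using \<open>x < x'\<close> by (intro mult_right_mono) auto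
  finally show ?thesis by simp
qed

lemma Hc_mono: "Hc j e \<Longrightarrow> Hc j e' \<Longrightarrow> length e = length e' \<Longrightarrow> e < e' \<Longrightarrow> vl e < vl e'"
proof (induction arbitrary: e' rule: Hc.induct)
  case (Hc_nil j) then show ?case by simp
next
  case (Hc_low c j r)
  from Hc_low.prems(1) show ?case
  proof cases
    case Hc_nil then show ?thesis using Hc_low.prems by simp
  next
    case (Hc_low c' r')
    have vr: "vl r < H (Suc (length r))" using Hc_lt[OF Hc_low.hyps(2)] G0 by simp
    from Hc_low.prems(3) \<open>e' = c' # r'\<close> have "c < c' \<or> c = c' \<and> r < r'" by simp
    then show ?thesis
    proof
      assume "c < c'" then show ?thesis using lt_comb[OF vr] \<open>e' = c' # r'\<close> Hc_low.prems(2) by simp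
    next
      assume "c = c' \<and> r < r'"
      then show ?thesis using Hc_low.IH[of r'] \<open>e' = c' # r'\<close> Hc_low.prems(2) \<open>Hc 0 r'\<close> by simp
    qed
  next
    case (Hc_top r')
    have vr: "vl r < H (Suc (length r))" using Hc_lt[OF Hc_low.hyps(2)] G0 by simp
    show ?thesis using lt_comb[OF vr Hc_low.hyps(1)] \<open>e' = th j # r'\<close> Hc_low.prems(2) by simp
  qed
next
  case (Hc_top j r)
  from Hc_top.prems(1) show ?case
  proof cases
    case Hc_nil then show ?thesis using Hc_top.prems by simp
  next
    case (Hc_low c' r')
    then show ?thesis using Hc_top.prems(3) by auto
  next
    case (Hc_top r')
    then show ?thesis using Hc_top.IH[of r'] Hc_top.prems by simp
  qed
qed

lemma Hc_surj: "m < G j n \<Longrightarrow> \<exists>e. Hc j e \<and> length e = n \<and> vl e = m"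
proof (induction n arbitrary: j m)
  case 0 then show ?case by (auto simp: G_def intro: Hc_nil)
next
  case (Suc n)
  have Hp: "H (Suc n) > 0" using H_pos[of n] by simp
  show ?case
  proof (cases "m < th j * H (Suc n)")
    case True
    define c where "c = m div H (Suc n)"
    have c: "c < th j" using True Hp unfolding c_def by (simp add: div_less_iff_less_mult)
    have "m mod H (Suc n) < G 0 n" using Hp G0 by simp
    then obtain r where r: "Hc 0 r" "length r = n" "vl r = m mod H (Suc n)" using Suc.IH by blast
    have "Hc j (c # r)" using c r by (intro Hc_low)
    moreover have "vl (c # r) = m" using r div_mult_mod_eq[of m "H (Suc n)"] unfolding c_def by simp
    ultimately show ?thesis using r by (intro exI[of _ "c # r"]) simp
  next
    case False
    then have "m - th j * H (Suc n) < G (Suc j) n" using Suc.prems G_Suc by simp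
    then obtain r where r: "Hc (Suc j) r" "length r = n" "vl r = m - th j * H (Suc n)" using Suc.IH by blast
    have "Hc j (th j # r)" using r by (intro Hc_top)
    moreover have "vl (th j # r) = m" using r False by simp
    ultimately show ?thesis using r by (intro exI[of _ "th j # r"]) simp
  qed
qed

end


lemma app_less_app: "length u = length v \<Longrightarrow> u < v \<Longrightarrow> u @ x < v @ (y::nat list)"
proof (induction u arbitrary: v)
  case Nil then show ?case by simp
next
  case (Cons a u)
  then obtain b v' where v: "v = b # v'" by (cases v) auto
  then show ?case using Cons by auto
qed

lemma app_less_app_same: "length u = length v \<Longrightarrow> u @ x < v @ (x::nat list) \<Longrightarrow> u < v"
proof (induction u arbitrary: v)
  case Nil then show ?case by simp
next
  case (Cons a u)
  then obtain b v' where v: "v = b # v'" by (cases v) auto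
  then show ?case using Cons by auto
qed

lemma zeros_le: "length y = n \<Longrightarrow> replicate n 0 \<le> (y::nat list)"
proof (induction y arbitrary: n)
  case Nil then show ?case by simp
next
  case (Cons a y)
  then show ?case by (cases a) auto
qed

lemma app_le_app: "length u = length v \<Longrightarrow> u \<le> v \<Longrightarrow> u @ x \<le> v @ (x::nat list)"
  using app_less_app[of u v x x] by (auto simp: le_less)

lemma same_app_le: "length x = length y \<Longrightarrow> x \<le> y \<Longrightarrow> u @ x \<le> u @ (y::nat list)"
  by (induction u) auto

context adm
begin

lemma Hcirc_lt: "e \<in> Hcirc L \<Longrightarrow> vl e < H (Suc (length e))"
  using Hc_lt[of 0 e] G0 by (simp add: Hcirc_iff)

lemma Hcirc_mono: "e \<in> Hcirc L \<Longrightarrow> e' \<in> Hcirc L \<Longrightarrow> length e = length e' \<Longrightarrow> e < e' \<Longrightarrow> vl e < vl e'"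
  using Hc_mono[of 0 e e'] by (simp add: Hcirc_iff)

lemma Hcirc_le_mono: "e \<in> Hcirc L \<Longrightarrow> e' \<in> Hcirc L \<Longrightarrow> length e = length e' \<Longrightarrow> e \<le> e' \<Longrightarrow> vl e \<le> vl e'"
  using Hcirc_mono[of e e'] by (auto simp: le_less)

lemma Hcirc_surj: "m < H (Suc n) \<Longrightarrow> \<exists>e \<in> Hcirc L. length e = n \<and> vl e = m"
  using Hc_surj[of m 0 n] G0 by (auto simp: Hcirc_iff)

lemma Hset_ge: "e \<in> Hset L \<Longrightarrow> H (length e) \<le> vl e"
proof -
  assume "e \<in> Hset L"
  then obtain c r where e: "e = c # r" "c > 0" unfolding Hset_def by (cases e) auto
  then have "H (length e) \<le> c * H (Suc (length r))" by simp
  moreover have "vl e = c * H (Suc (length r)) + vl r" using e by simp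
  ultimately show ?thesis by linarith
qed

lemma Hset_len: "e \<in> Hset L \<Longrightarrow> length e \<ge> 1"
  unfolding Hset_def by (cases e) auto

lemma Hset_exists: "1 \<le> m \<Longrightarrow> \<exists>e \<in> Hset L. vl e = m"
proof -
  assume m: "1 \<le> m"
  have ex: "\<exists>n. m < H (Suc n)" using H_ge_n[of m] by (intro exI[of _ m]) simp
  define M where "M = (LEAST n. m < H (Suc n))"
  have M1: "m < H (Suc M)" unfolding M_def by (rule LeastI_ex[OF ex])
  have M0: "M \<noteq> 0"
  proof
    assume "M = 0" then show False using M1 m H_1 by simp
  qed
  then obtain M' where M': "M = Suc M'" by (cases M) auto
  have M2: "H M \<le> m"
  proof (rule ccontr)
    assume "\<not> H M \<le> m"
    then have "m < H (Suc M')" using M' by simp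
    then have "M \<le> M'" unfolding M_def by (rule Least_le)
    then show False using M' by simp
  qed
  obtain e where e: "e \<in> Hcirc L" "length e = M" "vl e = m" using Hcirc_surj[OF M1] by blast
  obtain c r where cr: "e = c # r" using e(2) M' by (cases e) auto
  have "c > 0"
  proof (rule ccontr)
    assume "\<not> c > 0"
    then have c0: "c = 0" by simp
    have "Hc 0 (0 # r)" using e(1) cr c0 by (simp add: Hcirc_iff)
    then have "Hc 0 r"
    proof cases
      case Hc_low then show ?thesis by simp
    next
      case Hc_top then show ?thesis using th0 by simp
    qed
    then have "vl r < H (Suc (length r))" using Hcirc_lt Hcirc_iff by blast
    then show False using M2 e cr c0 by simp
  qed
  then have "e \<in> Hset L" using e cr unfolding Hset_def by simp
  then show ?thesis using e by blast
qed

lemma Hset_bounds: "e \<in> Hset L \<Longrightarrow> H (length e) \<le> vl e \<and> vl e < H (Suc (length e))"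
  using Hset_ge Hcirc_lt unfolding Hset_def by blast

lemma Hset_unique: "e \<in> Hset L \<Longrightarrow> e' \<in> Hset L \<Longrightarrow> vl e = vl e' \<Longrightarrow> e = e'"
proof -
  assume e: "e \<in> Hset L" and e': "e' \<in> Hset L" and v: "vl e = vl e'"
  have len: "length e = length e'"
  proof (rule ccontr)
    assume "length e \<noteq> length e'"
    then consider "length e < length e'" | "length e' < length e" by linarith
    then show False
    proof cases
      case 1
      then have "H (Suc (length e)) \<le> H (length e')" by (intro H_mono) auto
      then show False using Hset_bounds[OF e] Hset_bounds[OF e'] v by simp
    next
      case 2
      then have "H (Suc (length e')) \<le> H (length e)" by (intro H_mono) auto
      then show False using Hset_bounds[OF e] Hset_bounds[OF e'] v by simp
    qed
  qed
  show ?thesis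
  proof (rule ccontr)
    assume "e \<noteq> e'"
    then consider "e < e'" | "e' < e" by (meson linorder_neqE)
    then show False
      using Hcirc_mono[of e e'] Hcirc_mono[of e' e] e e' len v unfolding Hset_def by auto
  qed
qed

lemma Hexp_eq: "e \<in> Hset L \<Longrightarrow> Hexp L (vl e) = e"
  unfolding Hexp_def vl_sum[symmetric]
  by (rule the_equality) (auto intro: Hset_unique)

lemma Hexp_prop: "1 \<le> m \<Longrightarrow> Hexp L m \<in> Hset L \<and> vl (Hexp L m) = m"
  using Hset_exists[of m] Hexp_eq by auto

lemma Hc_take: "Hc j e \<Longrightarrow> Hc j (take k e)"
proof (induction arbitrary: k rule: Hc.induct)
  case (Hc_nil j) then show ?case by (simp add: Hc.Hc_nil)
next
  case (Hc_low c j r) then show ?case by (cases k) (auto intro: Hc.intros)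
next
  case (Hc_top j r) then show ?case by (cases k) (auto intro: Hc.intros)
qed

lemma Hc_snoc0: "Hc j e \<Longrightarrow> Hc j (e @ [0])"
proof (induction rule: Hc.induct)
  case (Hc_nil j)
  show ?case
  proof (cases "th j = 0")
    case True
    then show ?thesis using Hc_top[OF Hc.Hc_nil[of "Suc j"]] by simp
  next
    case False
    then show ?thesis by (auto intro: Hc.intros)
  qed
next
  case (Hc_low c j r) then show ?case by (auto intro: Hc.intros)
next
  case (Hc_top j r) then show ?case by (auto intro: Hc.intros)
qed

lemma Hc_zeros: "Hc j e \<Longrightarrow> Hc j (e @ replicate k 0)"
proof (induction k)
  case 0 then show ?case by simp
next
  case (Suc k)
  have "e @ replicate (Suc k) 0 = (e @ replicate k 0) @ [0]" by (simp add: replicate_append_same[symmetric])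
  then show ?case using Hc_snoc0[OF Suc.IH[OF Suc.prems]] by simp
qed

lemma Hset_take_zeros: "e \<in> Hset L \<Longrightarrow> 1 \<le> k \<Longrightarrow> take k e @ replicate t 0 \<in> Hset L"
proof -
  assume e: "e \<in> Hset L" and k: "1 \<le> k"
  then have "Hc 0 (take k e @ replicate t 0)" unfolding Hset_def Hcirc_iff
    by (auto intro: Hc_zeros Hc_take)
  moreover obtain a r where "e = a # r" "a > 0" using e unfolding Hset_def by (cases e) auto
  moreover obtain k' where "k = Suc k'" using k by (cases k) auto
  ultimately show ?thesis unfolding Hset_def Hcirc_iff by simp
qed

lemma vl_zeros: "vl (u @ replicate k 0) = (\<Sum>i<length u. u ! i * H (length u + k - i))"
proof (induction u)
  case Nil then show ?case by (induction k) auto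
next
  case (Cons a u)
  have "(\<Sum>i<length (a # u). (a # u) ! i * H (length (a # u) + k - i))
     = a * H (Suc (length u + k)) + (\<Sum>i<length u. u ! i * H (length u + k - i))"
    by (simp only: length_Cons sum.lessThan_Suc_shift) simp
  then show ?case using Cons by simp
qed

end


lemma telescope_next:
  fixes S :: "'a::linorder set" and g :: "'a \<Rightarrow> real"
  assumes "finite S" "S \<noteq> {}"
  shows "(\<Sum>b\<in>S. g (if {b'\<in>S. b<b'} \<noteq> {} then Min {b'\<in>S. b<b'} else X) - g b) = g X - g (Min S)"
  using assms
proof (induction "card S" arbitrary: S rule: less_induct)
  case less
  define a where "a = Min S"
  define S' where "S' = S - {a}"
  have aS: "a \<in> S" using less.prems unfolding a_def by simp
  have alt: "\<And>b. b \<in> S' \<Longrightarrow> a < b" using less.prems unfolding a_def S'_def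
    by (metis Diff_iff Min_le order_le_neq_trans singletonI)
  have S: "S = insert a S'" using aS unfolding S'_def by auto
  have fS': "finite S'" using less.prems unfolding S'_def by simp
  have aS': "a \<notin> S'" unfolding S'_def by simp
  define f where "f = (\<lambda>b. g (if {b'\<in>S. b<b'} \<noteq> {} then Min {b'\<in>S. b<b'} else X) - g b)"
  define f' where "f' = (\<lambda>b. g (if {b'\<in>S'. b<b'} \<noteq> {} then Min {b'\<in>S'. b<b'} else X) - g b)"
  have eqset: "{b'\<in>S. b<b'} = {b'\<in>S'. b<b'}" if "b \<in> S'" for b
    using alt[OF that] S by auto
  have "(\<Sum>b\<in>S. f b) = f a + (\<Sum>b\<in>S'. f b)" using S fS' aS' by simp
  also have "(\<Sum>b\<in>S'. f b) = (\<Sum>b\<in>S'. f' b)"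
    by (rule sum.cong[OF refl]) (unfold f_def f'_def, simp only: eqset)
  finally have sum: "(\<Sum>b\<in>S. f b) = f a + (\<Sum>b\<in>S'. f' b)" .
  have seta: "{b'\<in>S. a<b'} = S'" using alt S by auto
  show ?case
  proof (cases "S' = {}")
    case True
    then show ?thesis using sum seta unfolding f_def a_def by simp
  next
    case False
    have "card S' < card S" using S fS' aS' by simp
    then have IH: "(\<Sum>b\<in>S'. f' b) = g X - g (Min S')" using less.hyps fS' False unfolding f'_def by blast
    show ?thesis using sum IH seta False unfolding f_def a_def by simp
  qed
qed

context adm
begin

definition pad :: "nat \<Rightarrow> nat list \<Rightarrow> nat list" where
  "pad s e = (if N \<le> s then take s e else take s e @ replicate (N - s) 0)"

lemma pad_form: "s \<le> length e \<Longrightarrow> pad s e = take s e @ replicate (max s N - s) 0"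
  unfolding pad_def by auto

lemma LB_eq: "s \<le> length (Hexp L m) \<Longrightarrow> LB L s m = Some (pad s (Hexp L m))"
  unfolding LB_def pad_def Let_def by auto

lemma Hs_char: "b \<in> Hs L s \<longleftrightarrow> (\<exists>e\<in>Hset L. s \<le> length e \<and> b = pad s e)"
proof
  assume "b \<in> Hs L s"
  then obtain m where m: "m \<ge> 1" "LB L s m = Some b" unfolding Hs_def by auto
  have "\<not> s > length (Hexp L m)" using m unfolding LB_def Let_def by (auto split: if_splits)
  then show "\<exists>e\<in>Hset L. s \<le> length e \<and> b = pad s e"
    using m Hexp_prop[of m] LB_eq[of s m] by (intro bexI[of _ "Hexp L m"]) auto
next
  assume "\<exists>e\<in>Hset L. s \<le> length e \<and> b = pad s e"
  then obtain e where e: "e \<in> Hset L" "s \<le> length e" "b = pad s e" by auto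
  have "vl e \<ge> 1" using Hset_bounds[OF e(1)] Hset_len[OF e(1)] H_mono[of 1 "length e"] H_1 by simp
  moreover have "LB L s (vl e) = Some b" using e Hexp_eq[OF e(1)] LB_eq[of s "vl e"] by simp
  ultimately show "b \<in> Hs L s" unfolding Hs_def by auto
qed

lemma Hs_form: "b \<in> Hs L s \<Longrightarrow> length b = max s N \<and> b = take s b @ replicate (max s N - s) 0"
  unfolding Hs_char by (auto simp: pad_form min_def)

lemma Hs_zeros: "b \<in> Hs L s \<Longrightarrow> 1 \<le> s \<Longrightarrow> max s N \<le> M \<Longrightarrow>
   b @ replicate (M - max s N) 0 \<in> Hset L \<and> length (b @ replicate (M - max s N) 0) = M \<and>
   LB L s (vl (b @ replicate (M - max s N) 0)) = Some b"
proof -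
  assume b: "b \<in> Hs L s" and s: "1 \<le> s" and M: "max s N \<le> M"
  then obtain e where e: "e \<in> Hset L" "s \<le> length e" "b = pad s e" unfolding Hs_char by auto
  have bf: "b = take s e @ replicate (max s N - s) 0" using e pad_form by simp
  define w where "w = b @ replicate (M - max s N) 0"
  have w: "w = take s e @ replicate (M - s) 0" unfolding w_def bf using M
    by (simp add: replicate_add[symmetric])
  have wH: "w \<in> Hset L" unfolding w using Hset_take_zeros[OF e(1) s] .
  have lw: "length w = M" unfolding w using e(2) M by simp
  have tw: "take s w = take s e" unfolding w using e(2) by simp
  have "LB L s (vl w) = Some (pad s w)" using LB_eq[of s "vl w"] Hexp_eq[OF wH] lw M by simp
  also have "pad s w = b" using pad_form[of s w] lw M tw bf by simp
  finally show ?thesis using wH lw unfolding w_def by simp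
qed

lemma LB_char:
  assumes s: "1 \<le> s" and m: "1 \<le> m" and M: "length (Hexp L m) = M" "max s N \<le> M"
    and b: "b \<in> Hs L s"
    and lo: "vl (b @ replicate (M - max s N) 0) \<le> m"
    and hi: "\<And>b'. b' \<in> Hs L s \<Longrightarrow> b < b' \<Longrightarrow> m < vl (b' @ replicate (M - max s N) 0)"
  shows "LB L s m = Some b"
proof -
  define e where "e = Hexp L m"
  define z where "z = replicate (M - max s N) (0::nat)"
  have e: "e \<in> Hset L" "vl e = m" "length e = M" using Hexp_prop[OF m] M unfolding e_def by auto
  have LBp: "LB L s m = Some (pad s e)" using LB_eq[of s m] M unfolding e_def by simp
  define p where "p = pad s e"
  have p: "p \<in> Hs L s" unfolding p_def Hs_char using e M by auto
  have pf: "p = take s e @ replicate (max s N - s) 0" unfolding p_def using pad_form[of s e] e M by simp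
  have bf: "b = take s b @ replicate (max s N - s) 0" and lb: "length b = max s N" using Hs_form[OF b] by auto
  have lts: "length (take s b) = s" "length (take s e) = s" using lb e M by auto
  have bz: "b @ z \<in> Hset L" "length (b @ z) = M" using Hs_zeros[OF b s M(2)] unfolding z_def by auto
  have pz: "p @ z \<in> Hset L" "length (p @ z) = M" using Hs_zeros[OF p s M(2)] unfolding z_def by auto
  have esplit: "e = take s e @ drop s e" by simp
  show ?thesis
  proof (rule ccontr)
    assume "LB L s m \<noteq> Some b"
    then have "p \<noteq> b" using LBp p_def by simp
    then consider "p < b" | "b < p" by (meson linorder_neqE)
    then show False
    proof cases
      case 1
      then have "take s e < take s b" using pf bf lts app_less_app_same[of "take s e" "take s b"] by metis
      then have "take s e @ drop s e < take s b @ (replicate (max s N - s) 0 @ z)"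
        using lts by (intro app_less_app) auto
      then have "e < b @ z" using bf esplit by (metis append.assoc)
      then have "vl e < vl (b @ z)" using Hcirc_mono[of e "b @ z"] e bz unfolding Hset_def by auto
      then show False using lo e unfolding z_def by simp
    next
      case 2
      have "m < vl (p @ z)" using hi[OF p 2] unfolding z_def .
      moreover have "p @ z \<le> e"
      proof -
        have "p @ z = take s e @ (replicate (max s N - s) 0 @ z)" using pf by simp
        also have "replicate (max s N - s) 0 @ z = replicate (M - s) 0" unfolding z_def using M
          by (simp add: replicate_add[symmetric])
        also have "take s e @ replicate (M - s) 0 \<le> take s e @ drop s e"
          using e M by (intro same_app_le zeros_le) auto
        finally show ?thesis using esplit by simp
      qed
      then have "vl (p @ z) \<le> vl e" using Hcirc_le_mono[of "p @ z" e] e pz unfolding Hset_def by auto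
      ultimately show False using e by simp
    qed
  qed
qed

lemma Hc_bounded: "Hc j e \<Longrightarrow> x \<in> set e \<Longrightarrow> x \<le> Max (set L)"
proof (induction rule: Hc.induct)
  case (Hc_nil j) then show ?case by simp
next
  case (Hc_low c j r)
  have "th j \<in> set L" unfolding th_def using Npos by simp
  then have "th j \<le> Max (set L)" by simp
  then show ?case using Hc_low by auto
next
  case (Hc_top j r)
  have "th j \<in> set L" unfolding th_def using Npos by simp
  then have "th j \<le> Max (set L)" by simp
  then show ?case using Hc_top by auto
qed

lemma Hs_finite: "finite (Hs L s)"
proof -
  have "Hs L s \<subseteq> {xs. set xs \<subseteq> {0..Max (set L)} \<and> length xs = max s N}"
  proof
    fix b assume b: "b \<in> Hs L s"
    then obtain e where e: "e \<in> Hset L" "s \<le> length e" "b = pad s e" unfolding Hs_char by auto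
    have "set (take s e) \<subseteq> {0..Max (set L)}"
      using Hc_bounded[of 0 e] e(1) set_take_subset[of s e] unfolding Hset_def Hcirc_iff by auto
    then show "b \<in> {xs. set xs \<subseteq> {0..Max (set L)} \<and> length xs = max s N}"
      using e pad_form[of s e] by auto
  qed
  moreover have "finite {xs. set xs \<subseteq> {0..Max (set L)} \<and> length xs = max s N}"
    by (rule finite_lists_length_eq) simp
  ultimately show ?thesis by (rule finite_subset)
qed

definition u0 :: "nat \<Rightarrow> nat list" where "u0 s = 1 # replicate (max s N - 1) 0"

lemma u0_Hs: "1 \<le> s \<Longrightarrow> u0 s \<in> Hs L s"
proof -
  assume s: "1 \<le> s"
  have "Hc 0 [1]"
  proof (cases "th 0 = 1")
    case True then show ?thesis using Hc_top[OF Hc_nil[of "Suc 0"]] by simp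
  next
    case False then show ?thesis using th0 by (intro Hc_low Hc_nil) auto
  qed
  then have "Hc 0 ([1] @ replicate (max s N - 1) 0)" by (rule Hc_zeros)
  then have e: "u0 s \<in> Hset L" unfolding u0_def Hset_def Hcirc_iff by simp
  have "pad s (u0 s) = u0 s" using s pad_form[of s "u0 s"] unfolding u0_def
    by (cases s) (auto simp: replicate_add[symmetric] min_def)
  then show ?thesis unfolding Hs_char using e s by (intro bexI[of _ "u0 s"]) (auto simp: u0_def)
qed

lemma u0_le: "1 \<le> s \<Longrightarrow> b \<in> Hs L s \<Longrightarrow> u0 s \<le> b"
proof -
  assume s: "1 \<le> s" and b: "b \<in> Hs L s"
  then obtain e where e: "e \<in> Hset L" "s \<le> length e" "b = pad s e" unfolding Hs_char by auto
  obtain c r where cr: "e = c # r" "c > 0" using e unfolding Hset_def by (cases e) auto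
  have lb: "length b = max s N" using Hs_form[OF b] by simp
  obtain y where bcy: "b = c # y" using e cr s pad_form[of s e] by (cases s) auto
  have ly: "length y = max s N - 1" using lb bcy by simp
  show ?thesis
  proof (cases "c = 1")
    case True then show ?thesis using zeros_le[OF ly] bcy unfolding u0_def by simp
  next
    case False then show ?thesis using cr bcy unfolding u0_def by simp
  qed
qed

lemma Min_Hs: "1 \<le> s \<Longrightarrow> Min (Hs L s) = u0 s"
  using u0_Hs u0_le Hs_finite by (intro Min_eqI) auto

end


locale avg =
  fixes u :: "nat \<Rightarrow> real" and w :: "nat \<Rightarrow> real" and N j0 :: nat
  assumes N1: "N \<ge> 1"
    and wnn: "\<And>i. 1 \<le> i \<Longrightarrow> i \<le> N \<Longrightarrow> w i \<ge> 0"
    and wsum: "(\<Sum>i=1..N. w i) = 1"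
    and w1: "w 1 > 0" and wN: "w N > 0"
    and j0N: "j0 \<ge> N"
    and rec: "\<And>j. j \<ge> j0 \<Longrightarrow> u j = (\<Sum>i=1..N. w i * u (j - i))"
begin

lemma R1: "j \<ge> j0 \<Longrightarrow> (\<And>k. j - N \<le> k \<Longrightarrow> k < j \<Longrightarrow> lo \<le> u k) \<Longrightarrow> lo \<le> u j"
proof -
  assume j: "j \<ge> j0" and b: "\<And>k. j - N \<le> k \<Longrightarrow> k < j \<Longrightarrow> lo \<le> u k"
  have "lo = (\<Sum>i=1..N. w i * lo)" using wsum by (simp add: sum_distrib_right[symmetric])
  also have "\<dots> \<le> (\<Sum>i=1..N. w i * u (j - i))"
  proof (rule sum_mono)
    fix i assume i: "i \<in> {1..N}"
    have "j - N \<le> j - i" "j - i < j" using i j N1 j0N by auto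
    then have "lo \<le> u (j - i)" using b by simp
    then show "w i * lo \<le> w i * u (j - i)" using wnn i by (intro mult_left_mono) auto
  qed
  finally show ?thesis using rec[OF j] by simp
qed

lemma Inv: "n + N \<ge> j0 \<Longrightarrow> (\<And>k. n \<le> k \<Longrightarrow> k < n + N \<Longrightarrow> lo \<le> u k) \<Longrightarrow> k \<ge> n \<Longrightarrow> lo \<le> u k"
proof (induction k rule: less_induct)
  case (less k)
  show ?case
  proof (cases "k < n + N")
    case True then show ?thesis using less by simp
  next
    case False
    show ?thesis
    proof (rule R1)
      show "k \<ge> j0" using False less.prems by simp
      fix k' assume "k - N \<le> k'" "k' < k"
      then show "lo \<le> u k'" using less False by simp
    qed
  qed
qed

lemma R2: "j \<ge> j0 \<Longrightarrow> (\<And>k. j - N \<le> k \<Longrightarrow> k < j \<Longrightarrow> lo \<le> u k) \<Longrightarrow> 1 \<le> i \<Longrightarrow> i \<le> N \<Longrightarrow>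
   u j - lo \<ge> w i * (u (j - i) - lo)"
proof -
  assume j: "j \<ge> j0" and b: "\<And>k. j - N \<le> k \<Longrightarrow> k < j \<Longrightarrow> lo \<le> u k" and i: "1 \<le> i" "i \<le> N"
  have "u j - lo = (\<Sum>i=1..N. w i * (u (j - i) - lo))"
    using rec[OF j] wsum by (simp add: right_diff_distrib sum_subtractf sum_distrib_right[symmetric])
  also have "\<dots> \<ge> w i * (u (j - i) - lo)"
  proof (rule member_le_sum)
    show "i \<in> {1..N}" using i by simp
    fix x assume x: "x \<in> {1..N} - {i}"
    have "j - N \<le> j - x" "j - x < j" using x j j0N by auto
    then have "lo \<le> u (j - x)" using b by simp
    then show "0 \<le> w x * (u (j - x) - lo)" using wnn[of x] x by simp
  qed simp
  finally show ?thesis .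
qed

lemma w_le1: "1 \<le> i \<Longrightarrow> i \<le> N \<Longrightarrow> w i \<le> 1"
proof -
  assume i: "1 \<le> i" "i \<le> N"
  have "w i \<le> (\<Sum>i=1..N. w i)" by (rule member_le_sum) (use i wnn in auto)
  then show ?thesis using wsum by simp
qed

lemma step_lo:
  assumes n: "n + N \<ge> j0" and b: "\<And>k. n \<le> k \<Longrightarrow> k < n + N \<Longrightarrow> lo \<le> u k"
    and un: "u n \<ge> lo + d" and d: "d \<ge> 0"
  shows "\<And>k. n + N \<le> k \<Longrightarrow> k < n + 2 * N \<Longrightarrow> lo + w 1 ^ (N - 1) * w N * d \<le> u k"
proof -
  have all: "\<And>k. n \<le> k \<Longrightarrow> lo \<le> u k" using Inv[OF n b] by blast
  have A: "u (n + N) - lo \<ge> w N * d"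
  proof -
    have "u (n + N) - lo \<ge> w N * (u (n + N - N) - lo)"
      by (rule R2) (use n all N1 in auto)
    moreover have "w N * (u n - lo) \<ge> w N * d" using un wN by (intro mult_left_mono) auto
    ultimately show ?thesis by simp
  qed
  have B: "t < N \<Longrightarrow> u (n + N + t) - lo \<ge> w 1 ^ t * w N * d" for t
  proof (induction t)
    case 0 then show ?case using A by simp
  next
    case (Suc t)
    have "u (n + N + Suc t) - lo \<ge> w 1 * (u (n + N + Suc t - 1) - lo)"
      by (rule R2) (use n all N1 in auto)
    moreover have "w 1 * (u (n + N + t) - lo) \<ge> w 1 * (w 1 ^ t * w N * d)"
      using Suc w1 by (intro mult_left_mono) auto
    ultimately show ?case by (simp add: mult.assoc)
  qed
  fix k assume k: "n + N \<le> k" "k < n + 2 * N"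
  define t where "t = k - (n + N)"
  have t: "k = n + N + t" "t < N" using k unfolding t_def by auto
  have "w 1 ^ (N - 1) \<le> w 1 ^ t"
    using t w1 w_le1[of 1] N1 by (intro power_decreasing) auto
  then have "w 1 ^ (N - 1) * w N * d \<le> w 1 ^ t * w N * d"
    using wN d by (intro mult_right_mono) auto
  then show "lo + w 1 ^ (N - 1) * w N * d \<le> u k" using B[OF t(2)] t(1) by simp
qed

end

lemma avg_neg: "avg u w N j0 \<Longrightarrow> avg (\<lambda>j. - u j) w N j0"
  unfolding avg_def by (auto simp: sum_negf)

context avg
begin

definition "\<delta> = w 1 ^ (N - 1) * w N / 2"

lemma delta_pos: "\<delta> > 0" unfolding \<delta>_def using w1 wN by simp

lemma delta_le: "\<delta> \<le> 1/2"
proof -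
  have "w 1 ^ (N - 1) \<le> 1" using w1 w_le1[of 1] N1 by (intro power_le_one) auto
  moreover have "w N \<le> 1" using w_le1[of N] N1 by simp
  ultimately have "w 1 ^ (N - 1) * w N \<le> 1" using wN w1 by (intro mult_le_one) auto
  then show ?thesis unfolding \<delta>_def by simp
qed

lemma window_step:
  assumes n: "n + N \<ge> j0" and b: "\<And>k. n \<le> k \<Longrightarrow> k < n + N \<Longrightarrow> lo \<le> u k \<and> u k \<le> hi"
  shows "\<exists>lo' hi'. lo \<le> lo' \<and> hi' \<le> hi \<and> hi' - lo' \<le> (1 - \<delta>) * (hi - lo) \<and>
     (\<forall>k. n + N \<le> k \<longrightarrow> k < n + N + N \<longrightarrow> lo' \<le> u k \<and> u k \<le> hi')"
proof -
  have neg: "avg (\<lambda>j. - u j) w N j0" by (rule avg_neg) (rule avg_axioms)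
  have allu: "lo \<le> u k" if "n \<le> k" for k
    by (rule Inv[OF n _ that]) (simp add: b)
  have alll: "- hi \<le> - u k" if "n \<le> k" for k
    using avg.Inv[OF neg n, of "- hi" k] that by (simp add: b)
  define D where "D = hi - lo"
  have D: "D \<ge> 0" using b[of n] N1 unfolding D_def by simp
  show ?thesis
  proof (cases "u n \<ge> lo + D / 2")
    case True
    have "\<And>k. n + N \<le> k \<Longrightarrow> k < n + 2 * N \<Longrightarrow> lo + w 1 ^ (N - 1) * w N * (D/2) \<le> u k"
      by (rule step_lo[OF n _ True]) (simp_all add: b D)
    note L = this
    have eq: "\<delta> * D = w 1 ^ (N - 1) * w N * (D/2)" unfolding \<delta>_def by simp
    have A: "lo + \<delta> * D \<le> u k" if "n + N \<le> k" "k < n + N + N" for k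
      unfolding eq using L[of k] that by simp
    have "lo \<le> lo + \<delta> * D" using delta_pos D by simp
    moreover have "hi - (lo + \<delta> * D) \<le> (1 - \<delta>) * (hi - lo)" unfolding D_def by (simp add: algebra_simps)
    moreover have "\<forall>k. n + N \<le> k \<longrightarrow> k < n + N + N \<longrightarrow> lo + \<delta> * D \<le> u k \<and> u k \<le> hi"
      using A alll by fastforce
    ultimately show ?thesis by blast
  next
    case False
    then have "- u n \<ge> - hi + D / 2" unfolding D_def by (simp add: field_simps)
    then have "\<And>k. n + N \<le> k \<Longrightarrow> k < n + 2 * N \<Longrightarrow> - hi + w 1 ^ (N - 1) * w N * (D/2) \<le> - u k"
      using avg.step_lo[OF neg n, of "- hi" "D/2"] by (simp_all add: b D)
    note L = this
    have eq: "\<delta> * D = w 1 ^ (N - 1) * w N * (D/2)" unfolding \<delta>_def by simp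
    have A: "u k \<le> hi - \<delta> * D" if "n + N \<le> k" "k < n + N + N" for k
      unfolding eq using L[of k] that by simp
    have "hi - \<delta> * D \<le> hi" using delta_pos D by simp
    moreover have "hi - \<delta> * D - lo \<le> (1 - \<delta>) * (hi - lo)" unfolding D_def by (simp add: algebra_simps)
    moreover have "\<forall>k. n + N \<le> k \<longrightarrow> k < n + N + N \<longrightarrow> lo \<le> u k \<and> u k \<le> hi - \<delta> * D"
      using A allu by fastforce
    ultimately show ?thesis by blast
  qed
qed

lemma iterate:
  assumes n0: "n0 + N \<ge> j0" and b: "\<And>k. n0 \<le> k \<Longrightarrow> k < n0 + N \<Longrightarrow> lo0 \<le> u k \<and> u k \<le> hi0"
  shows "\<exists>lo hi. lo0 \<le> lo \<and> hi - lo \<le> (1 - \<delta>) ^ t * (hi0 - lo0) \<and>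
     (\<forall>k. n0 + t * N \<le> k \<longrightarrow> k < n0 + t * N + N \<longrightarrow> lo \<le> u k \<and> u k \<le> hi)"
proof (induction t)
  case 0 then show ?case using b by (intro exI[of _ lo0] exI[of _ hi0]) auto
next
  case (Suc t)
  then obtain lo hi where lh: "lo0 \<le> lo" "hi - lo \<le> (1 - \<delta>) ^ t * (hi0 - lo0)"
    "\<forall>k. n0 + t * N \<le> k \<longrightarrow> k < n0 + t * N + N \<longrightarrow> lo \<le> u k \<and> u k \<le> hi" by blast
  have "n0 + t * N + N \<ge> j0" using n0 by simp
  from window_step[OF this] lh(3) obtain lo' hi' where
    l': "lo \<le> lo'" "hi' \<le> hi" "hi' - lo' \<le> (1 - \<delta>) * (hi - lo)"
    "\<forall>k. n0 + t * N + N \<le> k \<longrightarrow> k < n0 + t * N + N + N \<longrightarrow> lo' \<le> u k \<and> u k \<le> hi'" by blast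
  have "(1 - \<delta>) * (hi - lo) \<le> (1 - \<delta>) * ((1 - \<delta>) ^ t * (hi0 - lo0))"
    using lh(2) delta_le by (intro mult_left_mono) auto
  then show ?case using l' lh(1)
    by (intro exI[of _ lo'] exI[of _ hi']) (auto simp: algebra_simps)
qed

lemma converges:
  assumes n0: "n0 + N \<ge> j0" and b: "\<And>k. n0 \<le> k \<Longrightarrow> k < n0 + N \<Longrightarrow> lo0 \<le> u k \<and> u k \<le> hi0"
  shows "\<exists>c. u \<longlonglongrightarrow> c \<and> c \<ge> lo0"
proof -
  have all: "\<exists>lo hi. lo0 \<le> lo \<and> hi - lo \<le> (1 - \<delta>) ^ t * (hi0 - lo0) \<and>
     (\<forall>k. n0 + t * N \<le> k \<longrightarrow> lo \<le> u k \<and> u k \<le> hi)" for t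
  proof -
    obtain lo hi where lh: "lo0 \<le> lo" "hi - lo \<le> (1 - \<delta>) ^ t * (hi0 - lo0)"
      "\<forall>k. n0 + t * N \<le> k \<longrightarrow> k < n0 + t * N + N \<longrightarrow> lo \<le> u k \<and> u k \<le> hi"
      using iterate[OF n0 b] by blast
    have neg: "avg (\<lambda>j. - u j) w N j0" by (rule avg_neg) (rule avg_axioms)
    have "n0 + t * N + N \<ge> j0" using n0 by simp
    then have "\<forall>k. n0 + t * N \<le> k \<longrightarrow> lo \<le> u k \<and> u k \<le> hi"
    proof (intro allI impI conjI)
      fix k assume k: "n0 + t * N \<le> k"
      show "lo \<le> u k" by (rule Inv[OF \<open>n0 + t * N + N \<ge> j0\<close> _ k]) (simp add: lh(3))
      show "u k \<le> hi" using avg.Inv[OF neg \<open>n0 + t * N + N \<ge> j0\<close>, of "- hi" k] k by (simp add: lh(3))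
    qed
    then show ?thesis using lh by blast
  qed
  have lim0: "(\<lambda>t. (1 - \<delta>) ^ t * (hi0 - lo0)) \<longlonglongrightarrow> 0"
    using delta_pos delta_le by (intro tendsto_mult_left_zero LIMSEQ_power_zero) auto
  have "Cauchy u"
  proof (rule metric_CauchyI)
    fix e :: real assume e: "e > 0"
    have "eventually (\<lambda>t. (1 - \<delta>) ^ t * (hi0 - lo0) < e) sequentially"
      using lim0 e by (rule order_tendstoD)
    then obtain t where t: "(1 - \<delta>) ^ t * (hi0 - lo0) < e"
      unfolding eventually_sequentially by blast
    obtain lo hi where lh: "lo0 \<le> lo" "hi - lo \<le> (1 - \<delta>) ^ t * (hi0 - lo0)"
      "\<forall>k. n0 + t * N \<le> k \<longrightarrow> lo \<le> u k \<and> u k \<le> hi" using all by blast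
    show "\<exists>M. \<forall>m\<ge>M. \<forall>n\<ge>M. dist (u m) (u n) < e"
    proof (intro exI[of _ "n0 + t * N"] allI impI)
      fix m n assume "n0 + t * N \<le> m" "n0 + t * N \<le> n"
      then have "lo \<le> u m" "u m \<le> hi" "lo \<le> u n" "u n \<le> hi" using lh(3) by auto
      then show "dist (u m) (u n) < e" using lh(2) t by (simp add: dist_real_def abs_le_iff)
    qed
  qed
  then obtain c where c: "u \<longlonglongrightarrow> c" using Cauchy_convergent convergent_def by blast
  have "lo0 \<le> c"
  proof (rule LIMSEQ_le_const[OF c])
    obtain lo hi where lh: "lo0 \<le> lo" "\<forall>k. n0 + 0 * N \<le> k \<longrightarrow> lo \<le> u k \<and> u k \<le> hi"
      using all[of 0] by blast
    show "\<exists>N'. \<forall>n\<ge>N'. lo0 \<le> u n" using lh by (intro exI[of _ n0]) force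
  qed
  then show ?thesis using c by blast
qed

end


lemma sum_split_last: "1 \<le> n \<Longrightarrow> (\<Sum>i=1..n. f i) = (\<Sum>i=1..n - 1. f i) + (f n :: 'a::comm_monoid_add)" for n :: nat
proof -
  assume "1 \<le> n"
  then obtain n' where n: "n = Suc n'" by (cases n) auto
  show ?thesis unfolding n using sum.nat_ivl_Suc'[of 1 n' f] by (simp add: add.commute)
qed

context adm
begin

lemma N1: "1 \<le> N" using N2 by linarith

definition cc :: "nat \<Rightarrow> real" where
  "cc i = (if i < N then real (L ! (i - 1)) else 1 + real (L ! (N - 1)))"

definition W :: "real \<Rightarrow> real" where "W t = (\<Sum>i=1..N. cc i * t ^ i)"

lemma cc_nn: "cc i \<ge> 0" unfolding cc_def by auto
lemma ccN: "cc N > 0" unfolding cc_def by (simp add: add_pos_nonneg)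
lemma cc1: "cc 1 > 0" unfolding cc_def using N2 adm by (auto simp: admissible_def)

lemma W_strict_mono: "0 \<le> s \<Longrightarrow> s < t \<Longrightarrow> W s < W t"
  unfolding W_def
proof (rule sum_strict_mono_ex1)
  assume st: "0 \<le> s" "s < t"
  show "finite {1..N}" by simp
  show "\<forall>x\<in>{1..N}. cc x * s ^ x \<le> cc x * t ^ x"
    using st cc_nn by (auto intro!: mult_left_mono power_mono)
  show "\<exists>a\<in>{1..N}. cc a * s ^ a < cc a * t ^ a"
    using st ccN N1 by (intro bexI[of _ N]) (auto intro!: mult_strict_left_mono power_strict_mono)
qed

lemma W0: "W 0 = 0" unfolding W_def by simp

lemma W1: "W 1 > 1"
proof -
  have "{1, N} \<subseteq> {1..N}" using N2 by auto
  then have "(\<Sum>i\<in>{1,N}. cc i * 1 ^ i) \<le> W 1" unfolding W_def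
    by (intro sum_mono2) (auto simp: cc_nn)
  moreover have "(\<Sum>i\<in>{1,N}. cc i * 1 ^ i) = cc 1 + cc N" using N2 by simp
  moreover have "cc N \<ge> 1" unfolding cc_def by simp
  ultimately show ?thesis using cc1 by simp
qed

lemma W_cont: "continuous_on A W" unfolding W_def by (intro continuous_intros)

lemma theta_ex: "\<exists>t. 0 < t \<and> t < 1 \<and> W t = 1"
proof -
  obtain t where t: "0 \<le> t" "t \<le> 1" "W t = 1" using IVT'[of W 0 1 1] W0 W1 W_cont by auto
  then show ?thesis using W0 W1 by (intro exI[of _ t]) (auto simp: order.order_iff_strict)
qed

lemma W_inj: "0 \<le> s \<Longrightarrow> 0 \<le> t \<Longrightarrow> W s = W t \<Longrightarrow> s = t"
  using W_strict_mono by (metis linorder_neqE_linordered_idom order_less_irrefl)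

lemma poly_W: "x > 0 \<Longrightarrow>
  x ^ N - (\<Sum>k=1..N - 1. real (L ! (k - 1)) * x ^ (N - k)) - (1 + real (L ! (N - 1))) = x ^ N * (1 - W (1 / x))"
proof -
  assume x: "x > 0"
  have "x ^ N * W (1 / x) = (\<Sum>i=1..N. cc i * x ^ (N - i))"
    unfolding W_def sum_distrib_left
  proof (rule sum.cong[OF refl])
    fix i assume "i \<in> {1..N}"
    then have "x ^ N = x ^ i * x ^ (N - i)" by (simp add: power_add[symmetric])
    then show "x ^ N * (cc i * (1 / x) ^ i) = cc i * x ^ (N - i)" using x by (simp add: power_one_over field_simps)
  qed
  also have "\<dots> = (\<Sum>i=1..N - 1. cc i * x ^ (N - i)) + cc N" using sum_split_last[of N "\<lambda>i. cc i * x ^ (N - i)"] N1 by simp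
  also have "(\<Sum>i=1..N - 1. cc i * x ^ (N - i)) = (\<Sum>k=1..N - 1. real (L ! (k - 1)) * x ^ (N - k))"
    by (rule sum.cong) (auto simp: cc_def)
  finally show ?thesis by (simp add: cc_def algebra_simps)
qed

definition thz :: real where "thz = (SOME t. 0 < t \<and> t < 1 \<and> W t = 1)"

lemma thz: "0 < thz" "thz < 1" "W thz = 1"
  using someI_ex[OF theta_ex] unfolding thz_def by auto

lemma psi_eq: "psiL L = 1 / thz"
  unfolding psiL_def
proof (rule the_equality)
  show "1 / thz > 0 \<and> (1 / thz) ^ N - (\<Sum>k=1..N - 1. real (L ! (k - 1)) * (1 / thz) ^ (N - k)) - (1 + real (L ! (N - 1))) = 0"
    using poly_W[of "1/thz"] thz by simp
next
  fix x assume x: "x > 0 \<and> x ^ N - (\<Sum>k=1..N - 1. real (L ! (k - 1)) * x ^ (N - k)) - (1 + real (L ! (N - 1))) = 0"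
  then have "x ^ N * (1 - W (1 / x)) = 0" using poly_W[of x] by argo
  then have "W (1 / x) = W thz" using x thz by simp
  then have "1 / x = thz" using W_inj x thz by simp
  then have "1 / (1 / x) = 1 / thz" by simp
  then show "x = 1 / thz" by simp
qed

abbreviation "\<psi> \<equiv> psiL L"
abbreviation "\<theta> \<equiv> thetaL L"

lemma theta_eq: "\<theta> = thz" unfolding thetaL_def psi_eq by simp
lemma theta_pos: "\<theta> > 0" using thz theta_eq by simp
lemma theta_lt1: "\<theta> < 1" using thz theta_eq by simp
lemma W_theta: "W \<theta> = 1" using thz theta_eq by simp
lemma psi_theta: "\<psi> = 1 / \<theta>" using psi_eq theta_eq by simp
lemma psi_gt1: "\<psi> > 1" using psi_theta theta_pos theta_lt1 by simp
lemma psi_theta_mult: "\<psi> * \<theta> = 1" using psi_theta theta_pos by simp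

lemma H_recN: "j \<ge> N + 1 \<Longrightarrow> real (H j) = (\<Sum>i=1..N. cc i * real (H (j - i)))"
proof -
  assume j: "j \<ge> N + 1"
  obtain m where m: "j = Suc m" using j by (cases j) auto
  have split: "(\<Sum>i=1..N. cc i * real (H (j - i))) =
      (\<Sum>i=1..N - 1. real (L ! (i - 1)) * real (H (j - i))) + (1 + real (L ! (N - 1))) * real (H (j - N))"
  proof -
    have "(\<Sum>i=1..N. cc i * real (H (j - i))) = (\<Sum>i=1..N - 1. cc i * real (H (j - i))) + cc N * real (H (j - N))"
      using sum_split_last[of N "\<lambda>i. cc i * real (H (j - i))"] N1 by simp
    also have "(\<Sum>i=1..N - 1. cc i * real (H (j - i))) = (\<Sum>i=1..N - 1. real (L ! (i - 1)) * real (H (j - i)))"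
      by (rule sum.cong) (auto simp: cc_def)
    finally show ?thesis by (simp add: cc_def)
  qed
  show ?thesis
  proof (cases "j = N + 1")
    case True
    have "H j = 1 + (\<Sum>k=1..m. L ! (k - 1) * H (Suc m - k))" using Hseq_Suc1[of m L] True m by simp
    also have "(\<Sum>k=1..m. L ! (k - 1) * H (Suc m - k)) = (\<Sum>k=1..N - 1. L ! (k - 1) * H (j - k)) + L ! (N - 1) * H (j - N)"
      using sum_split_last[of m "\<lambda>k. L ! (k - 1) * H (Suc m - k)"] True m N1 by simp
    finally have "real (H j) = 1 + (\<Sum>k=1..N - 1. real (L ! (k - 1)) * real (H (j - k))) + real (L ! (N - 1)) * real (H (j - N))"
      by simp
    moreover have "H (j - N) = 1" using True H_1 by simp
    ultimately show ?thesis using split by (simp add: algebra_simps)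
  next
    case False
    then have "\<not> Suc m \<le> N + 1" using j m by simp
    then have "H j = (\<Sum>k=1..N - 1. L ! (k - 1) * H (j - k)) + (1 + L ! (N - 1)) * H (j - N)"
      using Hseq_Suc2[of L m] Npos m by simp
    then show ?thesis using split by (simp add: algebra_simps)
  qed
qed

definition uH :: "nat \<Rightarrow> real" where "uH j = real (H j) * \<theta> ^ j"

lemma avg_uH: "avg uH (\<lambda>i. cc i * \<theta> ^ i) N (N + 1)"
proof
  show "1 \<le> N" using N1 by simp
  show "\<And>i. 1 \<le> i \<Longrightarrow> i \<le> N \<Longrightarrow> 0 \<le> cc i * \<theta> ^ i" using cc_nn theta_pos by simp
  show "(\<Sum>i = 1..N. cc i * \<theta> ^ i) = 1" using W_theta unfolding W_def .
  show "0 < cc 1 * \<theta> ^ 1" using cc1 theta_pos by simp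
  show "0 < cc N * \<theta> ^ N" using ccN theta_pos by simp
  show "N \<le> N + 1" by simp
  fix j assume j: "N + 1 \<le> j"
  have "uH j = (\<Sum>i=1..N. cc i * real (H (j - i))) * \<theta> ^ j" unfolding uH_def using H_recN[OF j] by simp
  also have "\<dots> = (\<Sum>i=1..N. cc i * \<theta> ^ i * uH (j - i))" unfolding sum_distrib_right uH_def
  proof (rule sum.cong[OF refl])
    fix i assume "i \<in> {1..N}"
    then have "\<theta> ^ j = \<theta> ^ i * \<theta> ^ (j - i)" using j by (simp add: power_add[symmetric])
    then show "cc i * real (H (j - i)) * \<theta> ^ j = cc i * \<theta> ^ i * (real (H (j - i)) * \<theta> ^ (j - i))" by simp
  qed
  finally show "uH j = (\<Sum>i=1..N. cc i * \<theta> ^ i * uH (j - i))" .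
qed

lemma uH_pos: "j \<ge> 1 \<Longrightarrow> uH j > 0"
  unfolding uH_def using H_pos[of "j - 1"] theta_pos by simp

lemma uH_conv: "\<exists>c>0. uH \<longlonglongrightarrow> c"
proof -
  interpret A: avg uH "\<lambda>i. cc i * \<theta> ^ i" N "N + 1" by (rule avg_uH)
  define S where "S = uH ` {1..<1 + N}"
  have S: "finite S" "S \<noteq> {}" unfolding S_def using Npos by auto
  have "\<exists>c. uH \<longlonglongrightarrow> c \<and> c \<ge> Min S"
    by (rule A.converges[of 1 "Min S" "Max S"]) (auto simp: S_def intro!: Min_le Max_ge)
  moreover have "Min S > 0" using S uH_pos unfolding S_def by (subst Min_gr_iff) auto
  ultimately show ?thesis by (meson less_le_trans)
qed

definition cH :: real where "cH = (SOME c. c > 0 \<and> uH \<longlonglongrightarrow> c)"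

lemma cH: "cH > 0" "uH \<longlonglongrightarrow> cH"
  using someI_ex[OF uH_conv] unfolding cH_def by auto

lemma ratio_lim: "(\<lambda>M. real (H (M - i)) / real (H M)) \<longlonglongrightarrow> \<theta> ^ i"
proof -
  have "(\<lambda>M. uH (M - i) / uH M * \<theta> ^ i) \<longlonglongrightarrow> cH / cH * \<theta> ^ i"
    using cH by (intro tendsto_intros seq_offset_neg) auto
  then have lim: "(\<lambda>M. uH (M - i) / uH M * \<theta> ^ i) \<longlonglongrightarrow> \<theta> ^ i" using cH by simp
  have ev: "eventually (\<lambda>M. uH (M - i) / uH M * \<theta> ^ i = real (H (M - i)) / real (H M)) sequentially"
    unfolding eventually_sequentially
  proof (intro exI[of _ i] allI impI)
    fix M assume "i \<le> M"
    then have "\<theta> ^ M = \<theta> ^ (M - i) * \<theta> ^ i" by (simp add: power_add[symmetric])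
    then show "uH (M - i) / uH M * \<theta> ^ i = real (H (M - i)) / real (H M)"
      unfolding uH_def using theta_pos by (simp add: field_simps)
  qed
  show ?thesis using Lim_transform_eventually[OF lim ev] .
qed

lemma ratio_Suc: "(\<lambda>M. real (H (Suc M)) / real (H M)) \<longlonglongrightarrow> \<psi>"
proof -
  have "(\<lambda>M. uH (Suc M) / uH M / \<theta>) \<longlonglongrightarrow> cH / cH / \<theta>"
    using cH theta_pos by (intro tendsto_intros) (auto simp: LIMSEQ_Suc)
  then have lim: "(\<lambda>M. uH (Suc M) / uH M / \<theta>) \<longlonglongrightarrow> \<psi>" using cH psi_theta by simp
  have ev: "eventually (\<lambda>M. uH (Suc M) / uH M / \<theta> = real (H (Suc M)) / real (H M)) sequentially"
    unfolding uH_def using theta_pos by (simp add: field_simps)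
  show ?thesis using Lim_transform_eventually[OF lim ev] .
qed

lemma dotH_lim: "length b = l \<Longrightarrow>
   (\<lambda>M. real (vl (b @ replicate (M - l) 0)) / real (H M)) \<longlonglongrightarrow> dotH L b"
proof -
  assume lb: "length b = l"
  have lim: "(\<lambda>M. \<Sum>i<l. real (b ! i) * (real (H (M - i)) / real (H M))) \<longlonglongrightarrow> dotH L b"
    unfolding dotH_def lb by (intro tendsto_intros ratio_lim)
  have ev: "eventually (\<lambda>M. (\<Sum>i<l. real (b ! i) * (real (H (M - i)) / real (H M))) =
      real (vl (b @ replicate (M - l) 0)) / real (H M)) sequentially"
    unfolding eventually_sequentially
  proof (intro exI[of _ l] allI impI)
    fix M assume M: "l \<le> M"
    have "vl (b @ replicate (M - l) 0) = (\<Sum>i<l. b ! i * H (M - i))"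
      using vl_zeros[of b "M - l"] lb M by simp
    then show "(\<Sum>i<l. real (b ! i) * (real (H (M - i)) / real (H M))) = real (vl (b @ replicate (M - l) 0)) / real (H M)"
      by (simp add: sum_divide_distrib)
  qed
  show ?thesis using Lim_transform_eventually[OF lim ev] .
qed

end


locale rot =
  fixes \<alpha> \<beta> :: real and q :: nat
  assumes q: "q > 0" and dpos: "frac (real q * \<alpha>) > 0"
begin

definition "d = frac (real q * \<alpha>)"
definition "p k = frac (real k * \<alpha> + \<beta>)"
definition "cell k = nat \<lfloor>p k / d\<rfloor>"
definition "R = nat \<lfloor>1 / d\<rfloor>"

lemma d_pos: "d > 0" using dpos d_def by simp
lemma d_lt1: "d < 1" unfolding d_def by (simp add: frac_lt_1)
lemma p_bounds: "0 \<le> p k" "p k < 1" unfolding p_def by (auto simp: frac_lt_1)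

lemma p_shift: "p (k + i * q) = frac (p k + real i * d)"
proof -
  have "real (k + i * q) * \<alpha> + \<beta> = (p k + real i * d) + of_int (\<lfloor>real k * \<alpha> + \<beta>\<rfloor> + int i * \<lfloor>real q * \<alpha>\<rfloor>)"
    unfolding p_def d_def frac_def by (simp add: algebra_simps)
  then show ?thesis unfolding p_def by (simp only: frac_add_of_int_right)
qed

lemma cell_iff: "cell k = i \<longleftrightarrow> real i * d \<le> p k \<and> p k < (real i + 1) * d"
proof -
  have "cell k = i \<longleftrightarrow> \<lfloor>p k / d\<rfloor> = int i" unfolding cell_def
    using p_bounds d_pos by (auto simp: nat_eq_iff)
  also have "\<dots> \<longleftrightarrow> real i \<le> p k / d \<and> p k / d < real i + 1" by (simp add: floor_eq_iff)
  also have "\<dots> \<longleftrightarrow> real i * d \<le> p k \<and> p k < (real i + 1) * d" using d_pos by (simp add: field_simps)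
  finally show ?thesis .
qed

lemma R_bounds: "real R * d \<le> 1" "1 < (real R + 1) * d"
proof -
  have f: "real R = of_int \<lfloor>1 / d\<rfloor>" unfolding R_def using d_pos by simp
  have a: "of_int \<lfloor>1 / d\<rfloor> \<le> 1 / d" "1 / d < of_int \<lfloor>1 / d\<rfloor> + 1" by linarith+
  have "of_int \<lfloor>1 / d\<rfloor> * d \<le> (1 / d) * d" using a(1) d_pos by (intro mult_right_mono) auto
  then show "real R * d \<le> 1" unfolding f using d_pos by simp
  have "(1 / d) * d < (of_int \<lfloor>1 / d\<rfloor> + 1) * d" using a(2) d_pos by (intro mult_strict_right_mono) auto
  then show "1 < (real R + 1) * d" unfolding f using d_pos by simp
qed

lemma cell_le_R: "cell k \<le> R"
proof -
  have "p k / d \<le> 1 / d" by (intro divide_right_mono) (use p_bounds[of k] d_pos in auto)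
  then show ?thesis unfolding cell_def R_def by (intro nat_mono floor_mono)
qed

lemma shift_up: "cell k = 0 \<Longrightarrow> (real i + 1) * d \<le> 1 \<Longrightarrow> cell (k + i * q) = i"
proof -
  assume c: "cell k = 0" and i: "(real i + 1) * d \<le> 1"
  have pk: "0 \<le> p k" "p k < d" using c cell_iff[of k 0] by auto
  have "p k + real i * d < 1" using pk i by (simp add: algebra_simps)
  then have "p (k + i * q) = p k + real i * d" using p_shift pk d_pos by (simp add: frac_eq)
  then show ?thesis unfolding cell_iff using pk by (simp add: algebra_simps)
qed

lemma shift_down: "cell k = i \<Longrightarrow> k \<ge> i * q \<Longrightarrow> cell (k - i * q) = 0"
proof -
  assume c: "cell k = i" and k: "k \<ge> i * q"
  define k' where "k' = k - i * q"
  have kk: "k = k' + i * q" using k unfolding k'_def by simp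
  have pk: "real i * d \<le> p k" "p k < (real i + 1) * d" using c cell_iff by auto
  have "p k = frac (p k' + real i * d)" using p_shift kk by simp
  then have pkeq: "p k = p k' + real i * d - of_int \<lfloor>p k' + real i * d\<rfloor>" unfolding frac_def .
  define m where "m = \<lfloor>p k' + real i * d\<rfloor>"
  have m: "p k' = p k - real i * d + of_int m" using pkeq unfolding m_def by simp
  have "of_int m > (-1::real)" using m p_bounds[of k'] pk d_lt1 by (simp add: algebra_simps)
  moreover have "of_int m < (1::real)" using m p_bounds[of k'] pk d_pos by (simp add: algebra_simps)
  ultimately have "m = 0" by simp
  then have "0 \<le> p k'" "p k' < d" using m pk by (simp_all add: algebra_simps)
  then show ?thesis unfolding k'_def[symmetric] cell_iff by simp
qed

definition "C n i = card {k\<in>{..<n}. cell k = i}"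

lemma C_up: "C n i \<le> C n 0 + i * q"
proof -
  have "{k\<in>{..<n}. cell k = i} \<subseteq> {..<i * q} \<union> (\<lambda>k. k + i * q) ` {k\<in>{..<n}. cell k = 0}"
  proof
    fix k assume k: "k \<in> {k\<in>{..<n}. cell k = i}"
    show "k \<in> {..<i * q} \<union> (\<lambda>k. k + i * q) ` {k\<in>{..<n}. cell k = 0}"
    proof (cases "k < i * q")
      case False
      then have "cell (k - i * q) = 0" using k shift_down by auto
      moreover have "k = (k - i * q) + i * q" using False by simp
      ultimately show ?thesis using k by (intro UnI2 image_eqI[of _ _ "k - i * q"]) auto
    qed simp
  qed
  then have "C n i \<le> card ({..<i * q} \<union> (\<lambda>k. k + i * q) ` {k\<in>{..<n}. cell k = 0})"
    unfolding C_def by (intro card_mono) auto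
  also have "\<dots> \<le> card {..<i * q} + card ((\<lambda>k. k + i * q) ` {k\<in>{..<n}. cell k = 0})" by (rule card_Un_le)
  also have "\<dots> \<le> i * q + C n 0" unfolding C_def using card_image_le[of "{k\<in>{..<n}. cell k = 0}" "\<lambda>k. k + i * q"] by simp
  finally show ?thesis by simp
qed

lemma C_low: "(real i + 1) * d \<le> 1 \<Longrightarrow> C n 0 \<le> C n i + i * q"
proof -
  assume i: "(real i + 1) * d \<le> 1"
  have "(\<lambda>k. k + i * q) ` {k\<in>{..<n}. cell k = 0} \<subseteq> {k\<in>{..<n}. cell k = i} \<union> {n..<n + i * q}"
    using shift_up[OF _ i] by auto
  then have "card ((\<lambda>k. k + i * q) ` {k\<in>{..<n}. cell k = 0}) \<le> card ({k\<in>{..<n}. cell k = i} \<union> {n..<n + i * q})"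
    by (intro card_mono) auto
  also have "\<dots> \<le> C n i + i * q" unfolding C_def using card_Un_le[of "{k\<in>{..<n}. cell k = i}" "{n..<n + i * q}"] by simp
  finally show ?thesis unfolding C_def by (simp add: card_image inj_on_def)
qed

lemma C_part: "n = (\<Sum>i\<le>R. C n i)"
proof -
  have U: "(\<Union>i\<in>{..R}. {k\<in>{..<n}. cell k = i}) = {..<n}" using cell_le_R by auto
  have "(\<Sum>i\<le>R. C n i) = card (\<Union>i\<in>{..R}. {k\<in>{..<n}. cell k = i})"
    unfolding C_def by (rule card_UN_disjoint[symmetric]) auto
  then show ?thesis unfolding U by simp
qed

lemma C0_bound: "real n \<le> (real R + 1) * (real (C n 0) + real R * real q)"
proof -
  have "real n = (\<Sum>i\<le>R. real (C n i))" using C_part[of n] by (metis of_nat_sum)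
  also have "\<dots> \<le> (\<Sum>i\<le>R. real (C n 0) + real R * real q)"
  proof (rule sum_mono)
    fix i assume "i \<in> {..R}"
    then have "real (C n i) \<le> real (C n 0) + real i * real q" using C_up[of n i] by (metis of_nat_add of_nat_le_iff of_nat_mult)
    also have "\<dots> \<le> real (C n 0) + real R * real q" using \<open>i \<in> {..R}\<close> by (simp add: mult_right_mono)
    finally show "real (C n i) \<le> real (C n 0) + real R * real q" .
  qed
  also have "\<dots> = (real R + 1) * (real (C n 0) + real R * real q)" by simp
  finally show ?thesis .
qed

lemma count_interval:
  assumes ab: "0 \<le> a" "a \<le> b" "b \<le> 1" and big: "(b - a) / d \<ge> 2"
  shows "real (card {k\<in>{..<n}. a \<le> p k \<and> p k \<le> b}) \<ge>
     ((b - a) / d - 2) * (real n / (real R + 1) - 2 * real R * real q)"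
proof -
  define i0 where "i0 = nat \<lceil>a / d\<rceil>"
  define i1 where "i1 = nat \<lfloor>b / d\<rfloor>"
  have ad: "a / d \<ge> 0" using ab d_pos by simp
  then have ri0: "real i0 = of_int \<lceil>a / d\<rceil>" unfolding i0_def by simp
  have i0: "real i0 \<le> a / d + 1" "a / d \<le> real i0" unfolding ri0 by linarith+
  have "b / d \<ge> 0" using ab d_pos by simp
  then have ri1: "real i1 = of_int \<lfloor>b / d\<rfloor>" unfolding i1_def by simp
  have i1: "b / d - 1 \<le> real i1" "real i1 \<le> b / d" unfolding ri1 by linarith+
  have i1R: "i1 \<le> R" unfolding i1_def R_def using ab d_pos by (intro nat_mono floor_mono divide_right_mono) auto
  have sub: "(\<Union>i\<in>{i0..<i1}. {k\<in>{..<n}. cell k = i}) \<subseteq> {k\<in>{..<n}. a \<le> p k \<and> p k \<le> b}"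
  proof
    fix k assume "k \<in> (\<Union>i\<in>{i0..<i1}. {k\<in>{..<n}. cell k = i})"
    then obtain i where i: "i \<in> {i0..<i1}" and k: "k < n" "cell k = i" by auto
    have "real i0 \<le> real i" "real i + 1 \<le> real i1" using i by auto
    then have "real i0 * d \<le> real i * d" "(real i + 1) * d \<le> real i1 * d" using d_pos
      by (auto intro: mult_right_mono)
    moreover have "a \<le> real i0 * d" "real i1 * d \<le> b" using i0(2) i1(2) d_pos by (auto simp: field_simps)
    ultimately have "a \<le> real i * d" "(real i + 1) * d \<le> b" by linarith+
    then show "k \<in> {k\<in>{..<n}. a \<le> p k \<and> p k \<le> b}" using k cell_iff[of k i] by auto
  qed
  have "(\<Sum>i\<in>{i0..<i1}. C n i) = card (\<Union>i\<in>{i0..<i1}. {k\<in>{..<n}. cell k = i})"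
    unfolding C_def by (rule card_UN_disjoint[symmetric]) auto
  also have "\<dots> \<le> card {k\<in>{..<n}. a \<le> p k \<and> p k \<le> b}" using sub by (intro card_mono) auto
  finally have A: "(\<Sum>i\<in>{i0..<i1}. real (C n i)) \<le> real (card {k\<in>{..<n}. a \<le> p k \<and> p k \<le> b})"
    by (metis of_nat_le_iff of_nat_sum)
  have C0: "real (C n 0) \<ge> real n / (real R + 1) - real R * real q"
    using C0_bound[of n] by (simp add: field_simps)
  have B: "real (C n i) \<ge> real n / (real R + 1) - 2 * real R * real q" if "i \<in> {i0..<i1}" for i
  proof -
    have "real i + 1 \<le> real i1" using that by auto
    then have "(real i + 1) * d \<le> real i1 * d" using d_pos by (intro mult_right_mono) auto
    moreover have "real i1 * d \<le> b" using i1(2) d_pos by (simp add: field_simps)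
    ultimately have "(real i + 1) * d \<le> 1" using ab by linarith
    then have "real (C n 0) \<le> real (C n i) + real i * real q" using C_low[of i n] by (metis of_nat_add of_nat_le_iff of_nat_mult)
    moreover have "real i \<le> real R" using that i1R by auto
    moreover have "real i * real q \<le> real R * real q" using \<open>real i \<le> real R\<close> by (intro mult_right_mono) auto
    ultimately have "real (C n i) \<ge> real (C n 0) - real R * real q" by linarith
    then show ?thesis using C0 by simp
  qed
  define X where "X = real n / (real R + 1) - 2 * real R * real q"
  have "(\<Sum>i\<in>{i0..<i1}. X) \<le> (\<Sum>i\<in>{i0..<i1}. real (C n i))"
    by (rule sum_mono) (use B in \<open>simp add: X_def\<close>)
  then have S: "real (card {i0..<i1}) * X \<le> (\<Sum>i\<in>{i0..<i1}. real (C n i))" by simp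
  have cd: "real (card {i0..<i1}) \<ge> (b - a) / d - 2" using i0 i1 by (simp add: diff_divide_distrib)
  have "((b - a) / d - 2) * X \<le> real (card {k\<in>{..<n}. a \<le> p k \<and> p k \<le> b})"
  proof (cases "X \<ge> 0")
    case True
    then have "((b - a) / d - 2) * X \<le> real (card {i0..<i1}) * X" using cd by (intro mult_right_mono) auto
    then show ?thesis using S A by linarith
  next
    case False
    then have "((b - a) / d - 2) * X \<le> 0" using big by (simp add: mult_nonneg_nonpos)
    then show ?thesis by simp
  qed
  then show ?thesis unfolding X_def .
qed

end


lemma equi_lower:
  fixes \<alpha> \<beta> a b \<eta> :: real
  assumes irr: "\<alpha> \<notin> \<rat>" and ab: "0 \<le> a" "a \<le> b" "b \<le> 1" and eta: "\<eta> > 0"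
  shows "eventually (\<lambda>n. real (card {k\<in>{..<n}. a \<le> frac (real k * \<alpha> + \<beta>) \<and> frac (real k * \<alpha> + \<beta>) \<le> b})
            \<ge> real n * (b - a - \<eta>)) sequentially"
proof (cases "b - a \<le> \<eta>")
  case True
  have "real n * (b - a - \<eta>) \<le> 0" for n using True by (simp add: mult_nonneg_nonpos)
  then have "real (card {k\<in>{..<n}. a \<le> frac (real k * \<alpha> + \<beta>) \<and> frac (real k * \<alpha> + \<beta>) \<le> b}) \<ge> real n * (b - a - \<eta>)" for n
    using of_nat_0_le_iff order_trans by blast
  then show ?thesis by simp
next
  case False
  define d0 where "d0 = \<eta> / 8"
  have d0: "d0 > 0" using eta d0_def by simp
  obtain q where q: "q > 0" "\<bar>frac (real q * \<alpha>) - d0 / 2\<bar> < d0 / 2"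
    using Kronecker_approx_1_explicit[OF irr, of "d0/2" "d0/2"] d0 False ab unfolding d0_def by auto
  have "- (d0 / 2) < frac (real q * \<alpha>) - d0 / 2 \<and> frac (real q * \<alpha>) - d0 / 2 < d0 / 2"
    using q(2) by (simp only: abs_less_iff) auto
  then have fq: "frac (real q * \<alpha>) > 0" "frac (real q * \<alpha>) < d0" by linarith+
  interpret rot \<alpha> \<beta> q using q fq by unfold_locales auto
  have dd: "d < d0" "d > 0" using fq d_def by auto
  have big: "(b - a) / d \<ge> 2" using False dd d0_def by (simp add: field_simps)
  define A where "A = (b - a) / d - 2"
  have A0: "A \<ge> 0" using big A_def by simp
  define K where "K = A * (2 * real R * real q)"
  have K0: "K \<ge> 0" using A0 unfolding K_def by simp
  have Rd: "(real R + 1) \<le> (1 + d) / d" using R_bounds dd by (simp add: field_simps)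
  have key: "A * (real n / (real R + 1)) \<ge> real n * (b - a - \<eta> / 2)" for n
  proof -
    have "real n * d / (1 + d) \<le> real n / (real R + 1)"
    proof -
      have "real n / ((1 + d) / d) \<le> real n / (real R + 1)"
        using Rd dd by (intro divide_left_mono) (auto intro!: mult_pos_pos divide_pos_pos)
      then show ?thesis using dd by (simp add: field_simps)
    qed
    then have "A * (real n * d / (1 + d)) \<le> A * (real n / (real R + 1))" using A0 by (intro mult_left_mono) auto
    moreover have "A * (real n * d / (1 + d)) = real n * ((b - a - 2 * d) / (1 + d))"
    proof -
      have Ad: "A * d = b - a - 2 * d" unfolding A_def using dd by (simp add: field_simps)
      have "A * (real n * d / (1 + d)) = real n * ((A * d) / (1 + d))" by simp
      then show ?thesis unfolding Ad .
    qed
    moreover have "(b - a - 2 * d) / (1 + d) \<ge> b - a - \<eta> / 2"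
    proof -
      have "(b - a - \<eta> / 2) * (1 + d) \<le> b - a - 2 * d"
      proof -
        have e1: "(b - a) * d \<le> d" using ab dd by (simp add: mult_le_cancel_right1)
        have e2: "\<eta> * d \<ge> 0" using eta dd by simp
        have e3: "d < \<eta> / 8" using dd d0_def by simp
        have "(b - a - \<eta> / 2) * (1 + d) = (b - a) + (b - a) * d - \<eta> / 2 - (\<eta> * d) / 2" by (simp add: algebra_simps)
        then show ?thesis using e1 e2 e3 dd by linarith
      qed
      then show ?thesis using dd by (simp add: field_simps)
    qed
    then have "real n * (b - a - \<eta> / 2) \<le> real n * ((b - a - 2 * d) / (1 + d))" by (intro mult_left_mono) auto
    ultimately show ?thesis by linarith
  qed
  have ev: "eventually (\<lambda>n. real n \<ge> 2 * K / \<eta>) sequentially"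
    by (rule eventually_sequentiallyI[of "nat \<lceil>2 * K / \<eta>\<rceil>"]) linarith
  show ?thesis
  proof (rule eventually_mono[OF ev])
    fix n assume n: "real n \<ge> 2 * K / \<eta>"
    have "real n * (\<eta> / 2) \<ge> K" using n eta by (simp add: field_simps)
    moreover have c: "real (card {k\<in>{..<n}. a \<le> p k \<and> p k \<le> b}) \<ge> A * (real n / (real R + 1)) - K"
      using count_interval[OF ab big, of n] unfolding A_def K_def by (simp add: algebra_simps)
    ultimately have "real (card {k\<in>{..<n}. a \<le> p k \<and> p k \<le> b}) \<ge> real n * (b - a - \<eta>)"
      using key[of n] by (simp add: algebra_simps)
    then show "real (card {k\<in>{..<n}. a \<le> frac (real k * \<alpha> + \<beta>) \<and> frac (real k * \<alpha> + \<beta>) \<le> b}) \<ge> real n * (b - a - \<eta>)"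
      unfolding p_def .
  qed
qed


context adm
begin

lemma dotH_app_zeros: "dotH L (xs @ replicate p 0) = dotH L xs"
  unfolding dotH_def by (simp add: sum_split_add nth_append)

lemma dotH_snoc: "dotH L (xs @ [c]) = dotH L xs + real c * \<theta> ^ length xs"
  unfolding dotH_def by (simp add: nth_append)

lemma dotH_map_th: "dotH L (map th [0..<n]) = (\<Sum>i<n. real (th i) * \<theta> ^ i)"
  unfolding dotH_def by simp

lemma period1: "(\<Sum>i<N. real (th i) * \<theta> ^ i) + \<theta> ^ (N - 1) = \<psi>"
proof -
  have "1 = (\<Sum>i=1..N. cc i * \<theta> ^ i)" using W_theta unfolding W_def by simp
  also have "\<dots> = (\<Sum>i=1..N - 1. cc i * \<theta> ^ i) + cc N * \<theta> ^ N"
    using sum_split_last[of N "\<lambda>i. cc i * \<theta> ^ i"] N1 by simp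
  also have "(\<Sum>i=1..N - 1. cc i * \<theta> ^ i) = (\<Sum>i=1..N - 1. real (L ! (i - 1)) * \<theta> ^ i)"
    by (rule sum.cong) (auto simp: cc_def)
  finally have "1 = (\<Sum>i=1..N. real (L ! (i - 1)) * \<theta> ^ i) + \<theta> ^ N"
    using sum_split_last[of N "\<lambda>i. real (L ! (i - 1)) * \<theta> ^ i"] N1 by (simp add: cc_def algebra_simps)
  also have "(\<Sum>i=1..N. real (L ! (i - 1)) * \<theta> ^ i) = (\<Sum>i<N. real (L ! i) * \<theta> ^ Suc i)"
    unfolding One_nat_def sum.atLeast1_atMost_eq by simp
  also have "\<dots> = \<theta> * (\<Sum>i<N. real (th i) * \<theta> ^ i)"
    unfolding sum_distrib_left by (rule sum.cong) (auto simp: th_less)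
  finally have e: "1 = \<theta> * (\<Sum>i<N. real (th i) * \<theta> ^ i) + \<theta> ^ N" .
  have eN: "Suc (N - 1) = N" using N1 by simp
  have "\<theta> ^ N = \<theta> ^ (Suc (N - 1))" by (simp only: eN)
  also have "\<dots> = \<theta> * \<theta> ^ (N - 1)" by (rule power_Suc)
  finally have "\<theta> ^ N = \<theta> * \<theta> ^ (N - 1)" .
  then have "1 = \<theta> * ((\<Sum>i<N. real (th i) * \<theta> ^ i) + \<theta> ^ (N - 1))" using e by (simp add: algebra_simps)
  then have "\<psi> * 1 = (\<psi> * \<theta>) * ((\<Sum>i<N. real (th i) * \<theta> ^ i) + \<theta> ^ (N - 1))" by simp
  then show ?thesis using psi_theta_mult by simp
qed

lemma th_period: "th (j * N + i) = th i"
  unfolding th_def by (simp add: mod_mult_self3)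

lemma period: "j \<ge> 1 \<Longrightarrow> (\<Sum>i<j * N. real (th i) * \<theta> ^ i) + \<theta> ^ (j * N - 1) = \<psi>"
proof (induction j rule: dec_induct)
  case base then show ?case using period1 by simp
next
  case (step j)
  have sj: "Suc j * N = j * N + N" by simp
  have "(\<Sum>i<Suc j * N. real (th i) * \<theta> ^ i) = (\<Sum>i<j * N. real (th i) * \<theta> ^ i) + (\<Sum>i<N. real (th (j * N + i)) * \<theta> ^ (j * N + i))"
    by (simp only: sj sum_split_add)
  also have "(\<Sum>i<N. real (th (j * N + i)) * \<theta> ^ (j * N + i)) = \<theta> ^ (j * N) * (\<Sum>i<N. real (th i) * \<theta> ^ i)"
    unfolding sum_distrib_left by (rule sum.cong) (auto simp: th_period power_add)
  also have "(\<Sum>i<N. real (th i) * \<theta> ^ i) = \<psi> - \<theta> ^ (N - 1)" using period1 by simp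
  finally have A: "(\<Sum>i<Suc j * N. real (th i) * \<theta> ^ i) = \<psi> - \<theta> ^ (j * N - 1) + \<theta> ^ (j * N) * (\<psi> - \<theta> ^ (N - 1))"
    using step.IH by simp
  have jN: "j * N \<ge> 1" using step.hyps N1 by (simp add: one_le_mult_iff)
  have B: "\<theta> ^ (j * N) * \<psi> = \<theta> ^ (j * N - 1)"
  proof -
    have eN: "Suc (j * N - 1) = j * N" using jN by arith
    have "\<theta> ^ (j * N) = \<theta> ^ (Suc (j * N - 1))" by (simp only: eN)
    also have "\<dots> = \<theta> ^ (j * N - 1) * \<theta>" by (rule power_Suc2)
    finally have "\<theta> ^ (j * N) = \<theta> ^ (j * N - 1) * \<theta>" .
    then show ?thesis using psi_theta_mult by (simp add: algebra_simps)
  qed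
  have C: "\<theta> ^ (j * N) * \<theta> ^ (N - 1) = \<theta> ^ (Suc j * N - 1)"
    using jN N1 by (simp add: power_add[symmetric] add.commute)
  show ?case using A B C by (simp add: algebra_simps)
qed

lemma L_map_th: "L = map th [0..<N]"
  by (rule nth_equalityI) (auto simp: th_less)

lemma excl_form: "\<exists>j p. j \<ge> 1 \<and> excl_block L s = butlast (map th [0..<j * N]) @ [1 + th (j * N - 1)] @ replicate p 0"
proof (cases "N \<le> s")
  case True
  define p where "p = s mod N"
  define j where "j = s div N"
  have sp: "s - p = j * N" unfolding p_def j_def by (simp add: minus_mod_eq_mult_div)
  have "0 < j" unfolding j_def using True Npos by (simp add: div_greater_zero_iff)
  then have j1: "j \<ge> 1" by simp
  have "th (j * N - 1) = L ! (N - 1)"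
  proof -
    have "j * N - 1 = (j - 1) * N + (N - 1)" using j1 N1 by (simp add: algebra_simps)
    moreover have "th ((j - 1) * N + (N - 1)) = th (N - 1)" by (rule th_period)
    moreover have "th (N - 1) = L ! (N - 1)" using N1 by (intro th_less) simp
    ultimately show ?thesis by simp
  qed
  then show ?thesis using True sp j1 unfolding excl_block_def Let_def Theta_pref_th p_def[symmetric]
    by (intro exI[of _ j] exI[of _ p]) simp
next
  case False
  have "th (1 * N - 1) = L ! (N - 1)" using th_less N1 by simp
  then show ?thesis using False unfolding excl_block_def Let_def
    by (intro exI[of _ 1] exI[of _ 0]) (simp add: L_map_th[symmetric])
qed

lemma dotH_excl: "dotH L (excl_block L s) = \<psi>"
proof -
  obtain j p where jp: "j \<ge> 1" "excl_block L s = butlast (map th [0..<j * N]) @ [1 + th (j * N - 1)] @ replicate p 0"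
    using excl_form by blast
  have jN: "j * N \<ge> 1" using jp N1 by (simp add: one_le_mult_iff)
  obtain m where m: "j * N = Suc m" using jN by (cases "j * N") auto
  have bl: "butlast (map th [0..<j * N]) = map th [0..<j * N - 1]" unfolding m by simp
  have "dotH L (excl_block L s) = dotH L (map th [0..<j * N - 1] @ [1 + th (j * N - 1)])"
    using jp bl dotH_app_zeros[of "map th [0..<j * N - 1] @ [1 + th (j * N - 1)]" p] by simp
  also have "\<dots> = (\<Sum>i<j * N - 1. real (th i) * \<theta> ^ i) + (1 + real (th (j * N - 1))) * \<theta> ^ (j * N - 1)"
    by (simp add: dotH_snoc dotH_map_th)
  also have "\<dots> = (\<Sum>i<j * N. real (th i) * \<theta> ^ i) + \<theta> ^ (j * N - 1)"
  proof -
    have "(\<Sum>i<j * N. real (th i) * \<theta> ^ i) = (\<Sum>i<j * N - 1. real (th i) * \<theta> ^ i) + real (th (j * N - 1)) * \<theta> ^ (j * N - 1)"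
      unfolding m by simp
    then show ?thesis by (simp add: algebra_simps)
  qed
  also have "\<dots> = \<psi>" using period jp by simp
  finally show ?thesis .
qed

lemma dotH_ge1: "1 \<le> s \<Longrightarrow> b \<in> Hs L s \<Longrightarrow> dotH L b \<ge> 1"
proof -
  assume s: "1 \<le> s" and b: "b \<in> Hs L s"
  then obtain e where e: "e \<in> Hset L" "s \<le> length e" "b = pad s e" unfolding Hs_char by auto
  obtain c r where cr: "e = c # r" "c > 0" using e unfolding Hset_def by (cases e) auto
  obtain y where bcy: "b = c # y" using e cr s pad_form[of s e] by (cases s) auto
  have "dotH L b = real c + (\<Sum>k<length y. real (y ! k) * \<theta> ^ Suc k)"
    unfolding dotH_def bcy by (simp only: length_Cons sum.lessThan_Suc_shift) simp
  moreover have "(\<Sum>k<length y. real (y ! k) * \<theta> ^ Suc k) \<ge> 0" using theta_pos by (intro sum_nonneg) simp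
  ultimately show ?thesis using cr by simp
qed

lemma dotH_le_psi: "1 \<le> s \<Longrightarrow> b \<in> Hs L s \<Longrightarrow> dotH L b \<le> \<psi>"
proof -
  assume s: "1 \<le> s" and b: "b \<in> Hs L s"
  define l where "l = max s N"
  have lb: "length b = l" using Hs_form[OF b] l_def by simp
  have lim1: "(\<lambda>M. real (vl (b @ replicate (M - l) 0)) / real (H M)) \<longlonglongrightarrow> dotH L b" by (rule dotH_lim[OF lb])
  have ev: "eventually (\<lambda>M. real (vl (b @ replicate (M - l) 0)) / real (H M) \<le> real (H (Suc M)) / real (H M)) sequentially"
    unfolding eventually_sequentially
  proof (intro exI[of _ l] allI impI)
    fix M assume M: "l \<le> M"
    have "b @ replicate (M - l) 0 \<in> Hset L" "length (b @ replicate (M - l) 0) = M"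
      using Hs_zeros[OF b s] M l_def by auto
    then have "vl (b @ replicate (M - l) 0) < H (Suc M)" using Hset_bounds by fastforce
    then show "real (vl (b @ replicate (M - l) 0)) / real (H M) \<le> real (H (Suc M)) / real (H M)"
      by (intro divide_right_mono) auto
  qed
  show ?thesis using tendsto_le[OF _ ratio_Suc lim1 ev] by simp
qed

end


locale mainloc = adm +
  fixes \<gamma> :: real
  assumes gam: "\<gamma> > 1" and irr: "log (psiL L) \<gamma> \<notin> \<rat>"
begin

definition "K k = nat \<lfloor>\<gamma> ^ k\<rfloor>"
definition "\<alpha> = log \<psi> \<gamma>"
definition "\<beta> = - log \<psi> cH"
definition "Mk k = length (Hexp L (K k))"

lemma psi_ne1: "\<psi> \<noteq> 1" and psi_pos: "\<psi> > 0" using psi_gt1 by auto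

lemma K_real: "real (K k) = of_int \<lfloor>\<gamma> ^ k\<rfloor>"
proof -
  have "\<gamma> ^ k \<ge> 1" using gam by simp
  then have "\<lfloor>\<gamma> ^ k\<rfloor> \<ge> 0" by simp
  then show ?thesis unfolding K_def by simp
qed

lemma K_bounds: "\<gamma> ^ k - 1 < real (K k)" "real (K k) \<le> \<gamma> ^ k"
  unfolding K_real by linarith+

lemma K_ge1: "K k \<ge> 1"
proof -
  have "\<gamma> ^ k \<ge> 1" using gam by simp
  then have "\<lfloor>\<gamma> ^ k\<rfloor> \<ge> 1" by (simp add: le_floor_iff)
  then show ?thesis unfolding K_def by arith
qed

lemma K_at_top: "filterlim K at_top sequentially"
  unfolding filterlim_at_top
proof
  fix Z :: nat
  obtain n0 where n0: "real Z + 1 < \<gamma> ^ n0" using real_arch_pow[OF gam] by blast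
  show "eventually (\<lambda>k. Z \<le> K k) sequentially"
    unfolding eventually_sequentially
  proof (intro exI[of _ n0] allI impI)
    fix k assume "n0 \<le> k"
    then have "\<gamma> ^ n0 \<le> \<gamma> ^ k" using gam by (intro power_increasing) auto
    then have "real Z < real (K k)" using n0 K_bounds[of k] by linarith
    then show "Z \<le> K k" by simp
  qed
qed

lemma K_ratio: "(\<lambda>k. real (K k) / \<gamma> ^ k) \<longlonglongrightarrow> 1"
proof (rule tendsto_sandwich)
  show "eventually (\<lambda>k. 1 - (1 / \<gamma>) ^ k \<le> real (K k) / \<gamma> ^ k) sequentially"
  proof (intro always_eventually allI)
    fix k
    have g: "\<gamma> ^ k > 0" using gam by simp
    have "(\<gamma> ^ k - 1) / \<gamma> ^ k \<le> real (K k) / \<gamma> ^ k" using K_bounds[of k] g by (intro divide_right_mono) auto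
    then show "1 - (1 / \<gamma>) ^ k \<le> real (K k) / \<gamma> ^ k" using g gam by (simp add: diff_divide_distrib power_one_over)
  qed
  show "eventually (\<lambda>k. real (K k) / \<gamma> ^ k \<le> 1) sequentially"
    using K_bounds gam by (intro always_eventually allI) simp
  have "(\<lambda>k. (1 / \<gamma>) ^ k) \<longlonglongrightarrow> 0" using gam by (intro LIMSEQ_power_zero) auto
  then show "(\<lambda>k. 1 - (1 / \<gamma>) ^ k) \<longlonglongrightarrow> 1" using tendsto_diff[of "\<lambda>_. 1" 1 sequentially] by force
  show "(\<lambda>k. 1) \<longlonglongrightarrow> (1::real)" by simp
qed

lemma Mk_bounds: "H (Mk k) \<le> K k" "K k < H (Suc (Mk k))" "Hexp L (K k) \<in> Hset L"
  using Hexp_prop[OF K_ge1[of k]] Hset_bounds[of "Hexp L (K k)"] unfolding Mk_def by auto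

lemma Mk_at_top: "filterlim Mk at_top sequentially"
  unfolding filterlim_at_top
proof
  fix Z :: nat
  have "eventually (\<lambda>k. H (Suc Z) \<le> K k) sequentially" using K_at_top unfolding filterlim_at_top by blast
  then show "eventually (\<lambda>k. Z \<le> Mk k) sequentially"
  proof (rule eventually_mono)
    fix k assume a: "H (Suc Z) \<le> K k"
    show "Z \<le> Mk k"
    proof (rule ccontr)
      assume "\<not> Z \<le> Mk k"
      then have "H (Suc (Mk k)) \<le> H (Suc Z)" by (intro H_mono) auto
      then show False using a Mk_bounds[of k] by simp
    qed
  qed
qed

definition "err k = log \<psi> (uH (Mk k)) - log \<psi> cH - log \<psi> (real (K k) / \<gamma> ^ k)"

lemma err_lim: "err \<longlonglongrightarrow> 0"
proof -
  have u: "(\<lambda>k. uH (Mk k)) \<longlonglongrightarrow> cH" using filterlim_compose[OF cH(2) Mk_at_top] .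
  have "(\<lambda>k. log \<psi> (uH (Mk k)) - log \<psi> cH - log \<psi> (real (K k) / \<gamma> ^ k)) \<longlonglongrightarrow> log \<psi> cH - log \<psi> cH - log \<psi> 1"
    using psi_pos psi_ne1 cH(1) by (intro tendsto_intros u K_ratio) auto
  then show ?thesis unfolding err_def by simp
qed

lemma x_decomp: "real k * \<alpha> + \<beta> = real (Mk k) + log \<psi> (real (K k) / real (H (Mk k))) + err k"
proof -
  define m where "m = real (K k)"
  define M where "M = Mk k"
  have m: "m > 0" unfolding m_def using K_ge1[of k] by simp
  have "M \<ge> 1" using Hset_len[OF Mk_bounds(3)[of k]] unfolding M_def Mk_def .
  then obtain M' where "M = Suc M'" by (cases M) auto
  then have HM: "real (H M) > 0" using H_pos[of M'] by simp
  have g: "\<gamma> ^ k > 0" using gam by simp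
  have uHM: "uH M > 0" unfolding uH_def using HM theta_pos by simp
  have A: "log \<psi> m = real k * \<alpha> + log \<psi> (m / \<gamma> ^ k)"
  proof -
    have e: "\<gamma> ^ k * (m / \<gamma> ^ k) = m" using g gam by simp
    have "log \<psi> (\<gamma> ^ k * (m / \<gamma> ^ k)) = log \<psi> (\<gamma> ^ k) + log \<psi> (m / \<gamma> ^ k)"
      by (rule log_mult_pos) (use g m in auto)
    then have "log \<psi> m = log \<psi> (\<gamma> ^ k) + log \<psi> (m / \<gamma> ^ k)" unfolding e .
    also have "log \<psi> (\<gamma> ^ k) = real k * \<alpha>" unfolding \<alpha>_def using gam by (simp add: log_nat_power)
    finally show ?thesis .
  qed
  have B: "log \<psi> m = log \<psi> (m / real (H M)) + log \<psi> (uH M) + real M"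
  proof -
    have tp: "\<theta> * \<psi> = 1" using psi_theta_mult by (simp add: mult.commute)
    have hm: "real (H M) = uH M * \<psi> ^ M" unfolding uH_def using tp
      by (simp add: mult.assoc power_mult_distrib[symmetric])
    have e: "(m / real (H M)) * uH M * \<psi> ^ M = m" using HM hm uHM psi_pos by simp
    have "log \<psi> ((m / real (H M)) * uH M * \<psi> ^ M) = log \<psi> ((m / real (H M)) * uH M) + log \<psi> (\<psi> ^ M)"
      by (rule log_mult_pos) (use m HM uHM psi_pos in auto)
    also have "log \<psi> ((m / real (H M)) * uH M) = log \<psi> (m / real (H M)) + log \<psi> (uH M)"
      by (rule log_mult_pos) (use m HM uHM psi_pos in auto)
    finally have "log \<psi> ((m / real (H M)) * uH M * \<psi> ^ M) = log \<psi> (m / real (H M)) + log \<psi> (uH M) + log \<psi> (\<psi> ^ M)" .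
    then have "log \<psi> m = log \<psi> (m / real (H M)) + log \<psi> (uH M) + log \<psi> (\<psi> ^ M)" unfolding e .
    then show ?thesis using psi_pos psi_ne1 by (simp add: log_pow_cancel)
  qed
  show ?thesis using A B unfolding err_def \<beta>_def m_def[symmetric] M_def[symmetric] by simp
qed

end


context mainloc
begin

lemma nb_facts:
  assumes s: "1 \<le> s"
  shows "{b'\<in>Hs L s. b < b'} \<noteq> {} \<Longrightarrow> next_block L s b = Min {b'\<in>Hs L s. b < b'} \<and> next_block L s b \<in> Hs L s
          \<and> (\<forall>b'\<in>Hs L s. b < b' \<longrightarrow> next_block L s b \<le> b')"
    and "{b'\<in>Hs L s. b < b'} = {} \<Longrightarrow> next_block L s b = excl_block L s"
    and "dotH L (next_block L s b) > 0" "dotH L (next_block L s b) \<le> \<psi>"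
proof -
  have fin: "finite {b'\<in>Hs L s. b < b'}" using Hs_finite by simp
  show A: "{b'\<in>Hs L s. b < b'} \<noteq> {} \<Longrightarrow> next_block L s b = Min {b'\<in>Hs L s. b < b'} \<and> next_block L s b \<in> Hs L s
          \<and> (\<forall>b'\<in>Hs L s. b < b' \<longrightarrow> next_block L s b \<le> b')"
    unfolding next_block_def using Min_in[OF fin] Min_le[OF fin] by auto
  show B: "{b'\<in>Hs L s. b < b'} = {} \<Longrightarrow> next_block L s b = excl_block L s"
    unfolding next_block_def by simp
  have "dotH L (next_block L s b) > 0 \<and> dotH L (next_block L s b) \<le> \<psi>"
  proof (cases "{b'\<in>Hs L s. b < b'} = {}")
    case True then show ?thesis using B dotH_excl psi_gt1 by simp
  next
    case False
    then have "next_block L s b \<in> Hs L s" using A by blast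
    then show ?thesis using dotH_ge1[OF s] dotH_le_psi[OF s] by fastforce
  qed
  then show "dotH L (next_block L s b) > 0" "dotH L (next_block L s b) \<le> \<psi>" by auto
qed

lemma log_psi_powr: "x > 0 \<Longrightarrow> log \<psi> (x * \<psi> powr c) = log \<psi> x + c"
  using psi_pos psi_ne1 by (simp add: log_mult_pos log_powr_cancel)

lemma block_claim:
  assumes s: "1 \<le> s" and b: "b \<in> Hs L s" and eps: "\<epsilon> > 0"
  shows "eventually (\<lambda>k. log \<psi> (dotH L b) + \<epsilon> \<le> frac (real k * \<alpha> + \<beta>) \<and>
            frac (real k * \<alpha> + \<beta>) \<le> log \<psi> (dotH L (next_block L s b)) - \<epsilon> \<longrightarrow> LB L s (K k) = Some b) sequentially"
proof -
  define l where "l = max s N"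
  define nb where "nb = next_block L s b"
  define S' where "S' = {b'\<in>Hs L s. b < b'}"
  define db where "db = dotH L b"
  define dn where "dn = dotH L nb"
  have lb: "length b = l" using Hs_form[OF b] l_def by simp
  have db: "db \<ge> 1" "db \<le> \<psi>" using dotH_ge1[OF s b] dotH_le_psi[OF s b] db_def by auto
  have dn: "dn > 0" "dn \<le> \<psi>" using nb_facts[OF s, of b] dn_def nb_def by auto
  have pe: "\<psi> powr (\<epsilon> / 2) > 1" using psi_gt1 eps by simp
  have pe': "\<psi> powr (- \<epsilon> / 2) < 1"
  proof -
    have "\<psi> powr (- \<epsilon> / 2) < \<psi> powr 0" using psi_gt1 eps by (intro powr_less_mono) auto
    then show ?thesis using psi_pos by simp
  qed
  define U where "U = db * \<psi> powr (\<epsilon> / 2)"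
  define V where "V = dn * \<psi> powr (- \<epsilon> / 2)"
  have U: "U > db" unfolding U_def using db pe by simp
  have V: "V < dn" unfolding V_def using dn pe' by simp
  have EM1: "eventually (\<lambda>M. real (vl (b @ replicate (M - l) 0)) / real (H M) < U) sequentially"
    using order_tendstoD(2)[OF dotH_lim[OF lb] U[unfolded db_def]] .
  have EM2: "eventually (\<lambda>M. S' \<noteq> {} \<longrightarrow> V < real (vl (nb @ replicate (M - l) 0)) / real (H M)) sequentially"
  proof (cases "S' = {}")
    case True then show ?thesis by simp
  next
    case False
    then have "nb \<in> Hs L s" using nb_facts[OF s, of b] unfolding nb_def S'_def by blast
    then have "length nb = l" using Hs_form l_def by simp
    from order_tendstoD(1)[OF dotH_lim[OF this] V[unfolded dn_def]] show ?thesis by (rule eventually_mono) simp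
  qed
  have EM3: "eventually (\<lambda>M. l \<le> M) sequentially" by (rule eventually_ge_at_top)
  have pp: "\<psi> < \<psi> powr (1 + \<epsilon> / 2)"
  proof -
    have "\<psi> powr 1 < \<psi> powr (1 + \<epsilon> / 2)" using psi_gt1 eps by (intro powr_less_mono) auto
    then show ?thesis using psi_pos by simp
  qed
  have EM4: "eventually (\<lambda>M. real (H (Suc M)) / real (H M) < \<psi> powr (1 + \<epsilon> / 2)) sequentially"
    using order_tendstoD(2)[OF ratio_Suc pp] .
  have EM: "eventually (\<lambda>M. real (vl (b @ replicate (M - l) 0)) / real (H M) < U \<and>
      (S' \<noteq> {} \<longrightarrow> V < real (vl (nb @ replicate (M - l) 0)) / real (H M)) \<and> l \<le> M \<and>
      real (H (Suc M)) / real (H M) < \<psi> powr (1 + \<epsilon> / 2)) sequentially"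
    using EM1 EM2 EM3 EM4 by (intro eventually_conj)
  have EMk: "eventually (\<lambda>k. real (vl (b @ replicate (Mk k - l) 0)) / real (H (Mk k)) < U \<and>
      (S' \<noteq> {} \<longrightarrow> V < real (vl (nb @ replicate (Mk k - l) 0)) / real (H (Mk k))) \<and> l \<le> Mk k \<and>
      real (H (Suc (Mk k))) / real (H (Mk k)) < \<psi> powr (1 + \<epsilon> / 2)) sequentially"
    using Mk_at_top EM unfolding filterlim_iff by blast
  have EK: "eventually (\<lambda>k. \<bar>err k\<bar> < \<epsilon> / 2) sequentially"
  proof -
    have "eventually (\<lambda>k. err k < \<epsilon> / 2) sequentially" using order_tendstoD(2)[OF err_lim, of "\<epsilon> / 2"] eps by simp
    moreover have "eventually (\<lambda>k. - (\<epsilon> / 2) < err k) sequentially" using order_tendstoD(1)[OF err_lim, of "- (\<epsilon> / 2)"] eps by simp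
    ultimately show ?thesis by eventually_elim auto
  qed
  show ?thesis
  proof (rule eventually_mono[OF eventually_conj[OF EMk EK]], intro impI)
    fix k
    define m where "m = K k"
    define M where "M = Mk k"
    define x where "x = real k * \<alpha> + \<beta>"
    assume A: "(real (vl (b @ replicate (Mk k - l) 0)) / real (H (Mk k)) < U \<and>
      (S' \<noteq> {} \<longrightarrow> V < real (vl (nb @ replicate (Mk k - l) 0)) / real (H (Mk k))) \<and> l \<le> Mk k \<and>
      real (H (Suc (Mk k))) / real (H (Mk k)) < \<psi> powr (1 + \<epsilon> / 2)) \<and> \<bar>err k\<bar> < \<epsilon> / 2"
    assume F: "log \<psi> (dotH L b) + \<epsilon> \<le> frac (real k * \<alpha> + \<beta>) \<and>
            frac (real k * \<alpha> + \<beta>) \<le> log \<psi> (dotH L (next_block L s b)) - \<epsilon>"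
    have m1: "m \<ge> 1" unfolding m_def by (rule K_ge1)
    have HMm: "H M \<le> m" "m < H (Suc M)" using Mk_bounds[of k] unfolding m_def M_def by auto
    have "M \<ge> 1" using Hset_len[OF Mk_bounds(3)[of k]] unfolding M_def Mk_def .
    then obtain M' where "M = Suc M'" by (cases M) auto
    then have HM: "real (H M) > 0" using H_pos[of M'] by simp
    define r where "r = real m / real (H M)"
    have r1: "r \<ge> 1" unfolding r_def using HMm HM by simp
    have r2: "r < \<psi> powr (1 + \<epsilon> / 2)"
    proof -
      have "r < real (H (Suc M)) / real (H M)" unfolding r_def using HMm HM by (intro divide_strict_right_mono) auto
      then show ?thesis using A unfolding M_def by simp
    qed
    define t where "t = log \<psi> r"
    have t0: "t \<ge> 0" unfolding t_def using r1 psi_gt1 by simp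
    have t1: "t < 1 + \<epsilon> / 2" unfolding t_def using r2 r1 psi_gt1 psi_pos psi_ne1
      by (metis log_less log_powr_cancel less_le_trans zero_less_one)
    have xd: "x = real M + t + err k" unfolding x_def t_def r_def m_def M_def by (rule x_decomp)
    have lo0: "log \<psi> (dotH L b) \<ge> 0" using db psi_gt1 unfolding db_def by simp
    have hi1: "log \<psi> (dotH L nb) \<le> 1" using dn psi_gt1 psi_pos psi_ne1 unfolding dn_def
      by (metis log_mono log_eq_one)
    have fx: "\<epsilon> \<le> frac x" "frac x \<le> 1 - \<epsilon>" using F lo0 hi1 unfolding x_def nb_def by auto
    have fl: "\<lfloor>x\<rfloor> = int M"
    proof -
      have "of_int \<lfloor>x\<rfloor> = x - frac x" unfolding frac_def by simp
      then have "of_int \<lfloor>x\<rfloor> > real M - 1" "of_int \<lfloor>x\<rfloor> < real M + 1" using xd fx t0 t1 A by auto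
      then have "\<lfloor>x\<rfloor> > int M - 1" "\<lfloor>x\<rfloor> < int M + 1" by linarith+
      then show ?thesis by simp
    qed
    have tf: "t = frac x - err k" using fl xd unfolding frac_def by simp
    have tlo: "t > log \<psi> U"
    proof -
      have "log \<psi> U = log \<psi> (dotH L b) + \<epsilon> / 2" unfolding U_def db_def using db db_def log_psi_powr by simp
      then show ?thesis using tf F A unfolding x_def by auto
    qed
    have rU: "r > U" using tlo unfolding t_def using psi_gt1 r1 U db
      by (subst (asm) log_less_cancel_iff) auto
    have lo_ok: "vl (b @ replicate (M - l) 0) \<le> m"
    proof -
      have "real (vl (b @ replicate (M - l) 0)) < U * real (H M)" using A HM unfolding M_def by (simp add: divide_less_eq)
      also have "\<dots> < r * real (H M)" using rU HM by simp
      also have "\<dots> = real m" unfolding r_def using HM by simp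
      finally show ?thesis by simp
    qed
    have hi_ok: "\<And>b'. b' \<in> Hs L s \<Longrightarrow> b < b' \<Longrightarrow> m < vl (b' @ replicate (M - l) 0)"
    proof -
      fix b' assume b': "b' \<in> Hs L s" "b < b'"
      then have S'ne: "S' \<noteq> {}" unfolding S'_def by blast
      then have nbf: "nb \<in> Hs L s" "nb \<le> b'" using nb_facts[OF s, of b] b' unfolding nb_def S'_def by blast+
      have thi: "t < log \<psi> V"
      proof -
        have "log \<psi> V = log \<psi> (dotH L nb) - \<epsilon> / 2" unfolding V_def dn_def using dn dn_def log_psi_powr by simp
        then show ?thesis using tf F A unfolding x_def nb_def by auto
      qed
      have rV: "r < V" using thi unfolding t_def using psi_gt1 r1 V dn
        by (subst (asm) log_less_cancel_iff) (auto simp: V_def)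
      have "real m = r * real (H M)" unfolding r_def using HM by simp
      also have "\<dots> < V * real (H M)" using rV HM by simp
      also have "\<dots> < real (vl (nb @ replicate (M - l) 0))" using A S'ne HM unfolding M_def by (simp add: less_divide_eq)
      finally have "m < vl (nb @ replicate (M - l) 0)" by simp
      also have "vl (nb @ replicate (M - l) 0) \<le> vl (b' @ replicate (M - l) 0)"
      proof -
        have lM: "l \<le> M" using A unfolding M_def by simp
        have "nb @ replicate (M - l) 0 \<in> Hset L" "length (nb @ replicate (M - l) 0) = M"
          using Hs_zeros[OF nbf(1) s] lM l_def by auto
        moreover have "b' @ replicate (M - l) 0 \<in> Hset L" "length (b' @ replicate (M - l) 0) = M"
          using Hs_zeros[OF b'(1) s] lM l_def by auto
        moreover have "nb @ replicate (M - l) 0 \<le> b' @ replicate (M - l) 0"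
          using nbf Hs_form[OF nbf(1)] Hs_form[OF b'(1)] by (intro app_le_app) auto
        ultimately show ?thesis using Hcirc_le_mono unfolding Hset_def by auto
      qed
      finally show "m < vl (b' @ replicate (M - l) 0)" .
    qed
    have "LB L s m = Some b"
      by (rule LB_char[OF s m1 _ _ b lo_ok[unfolded l_def]]) (use A hi_ok l_def in \<open>auto simp: M_def Mk_def m_def\<close>)
    then show "LB L s (K k) = Some b" unfolding m_def .
  qed
qed

end


context mainloc
begin

definition "cnt s b n = card {k\<in>{1..n}. LB L s (K k) = Some b}"
definition "len s b = log \<psi> (dotH L (next_block L s b) / dotH L b)"

lemma len_eq: "1 \<le> s \<Longrightarrow> b \<in> Hs L s \<Longrightarrow> len s b = log \<psi> (dotH L (next_block L s b)) - log \<psi> (dotH L b)"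
  unfolding len_def using nb_facts(3)[of s b] dotH_ge1[of s b] by (simp add: log_divide)

lemma count_lower:
  assumes s: "1 \<le> s" and b: "b \<in> Hs L s" and eps: "\<epsilon> > 0"
  shows "eventually (\<lambda>n. real (cnt s b n) \<ge> real n * (len s b - 4 * \<epsilon>)) sequentially"
proof -
  define lo where "lo = log \<psi> (dotH L b)"
  define hi where "hi = log \<psi> (dotH L (next_block L s b))"
  have lh: "len s b = hi - lo" unfolding lo_def hi_def using len_eq[OF s b] .
  have lo0: "lo \<ge> 0" unfolding lo_def using dotH_ge1[OF s b] psi_gt1 by simp
  have hi1: "hi \<le> 1" unfolding hi_def using nb_facts(3,4)[OF s, of b] psi_gt1 psi_pos psi_ne1
    by (metis log_mono log_eq_one)
  show ?thesis
  proof (cases "lo + \<epsilon> \<le> hi - \<epsilon>")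
    case False
    then have "real n * (len s b - 4 * \<epsilon>) \<le> 0" for n using lh eps by (simp add: mult_nonneg_nonpos)
    then show ?thesis by (intro always_eventually allI) (meson of_nat_0_le_iff order_trans)
  next
    case True
    obtain k0 where k0: "\<And>k. k \<ge> k0 \<Longrightarrow> lo + \<epsilon> \<le> frac (real k * \<alpha> + \<beta>) \<and> frac (real k * \<alpha> + \<beta>) \<le> hi - \<epsilon> \<Longrightarrow> LB L s (K k) = Some b"
      using block_claim[OF s b eps] unfolding eventually_sequentially lo_def hi_def by blast
    have E1: "eventually (\<lambda>n. real (card {k\<in>{..<n}. lo + \<epsilon> \<le> frac (real k * \<alpha> + \<beta>) \<and> frac (real k * \<alpha> + \<beta>) \<le> hi - \<epsilon>})
            \<ge> real n * ((hi - \<epsilon>) - (lo + \<epsilon>) - \<epsilon>)) sequentially"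
      using equi_lower[of \<alpha> "lo + \<epsilon>" "hi - \<epsilon>" \<epsilon> \<beta>] irr True lo0 hi1 eps unfolding \<alpha>_def by auto
    have E2: "eventually (\<lambda>n. real n \<ge> real (k0 + 1) / \<epsilon>) sequentially"
      by (rule eventually_sequentiallyI[of "nat \<lceil>real (k0 + 1) / \<epsilon>\<rceil>"]) linarith
    show ?thesis
    proof (rule eventually_mono[OF eventually_conj[OF E1 E2]])
      fix n
      assume A: "real (card {k\<in>{..<n}. lo + \<epsilon> \<le> frac (real k * \<alpha> + \<beta>) \<and> frac (real k * \<alpha> + \<beta>) \<le> hi - \<epsilon>})
            \<ge> real n * ((hi - \<epsilon>) - (lo + \<epsilon>) - \<epsilon>) \<and> real n \<ge> real (k0 + 1) / \<epsilon>"
      have sub: "{k\<in>{..<n}. lo + \<epsilon> \<le> frac (real k * \<alpha> + \<beta>) \<and> frac (real k * \<alpha> + \<beta>) \<le> hi - \<epsilon>}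
          \<subseteq> {..<k0 + 1} \<union> {k\<in>{1..n}. LB L s (K k) = Some b}"
        using k0 by force
      have "card {k\<in>{..<n}. lo + \<epsilon> \<le> frac (real k * \<alpha> + \<beta>) \<and> frac (real k * \<alpha> + \<beta>) \<le> hi - \<epsilon>}
          \<le> card ({..<k0 + 1} \<union> {k\<in>{1..n}. LB L s (K k) = Some b})" using sub by (intro card_mono) auto
      also have "\<dots> \<le> (k0 + 1) + cnt s b n" unfolding cnt_def using card_Un_le[of "{..<k0 + 1}"] by simp
      finally have c: "real n * ((hi - \<epsilon>) - (lo + \<epsilon>) - \<epsilon>) \<le> real (k0 + 1) + real (cnt s b n)" using A by linarith
      have "real (k0 + 1) \<le> real n * \<epsilon>" using A eps by (simp add: field_simps)
      moreover have "real n * (len s b - 4 * \<epsilon>) = real n * ((hi - \<epsilon>) - (lo + \<epsilon>) - \<epsilon>) - real n * \<epsilon>"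
        unfolding lh by (simp add: algebra_simps)
      ultimately show "real (cnt s b n) \<ge> real n * (len s b - 4 * \<epsilon>)" using c by linarith
    qed
  qed
qed

lemma u0_dotH: "dotH L (u0 s) = 1"
proof -
  have "u0 s = [1] @ replicate (max s N - 1) 0" unfolding u0_def by simp
  then have "dotH L (u0 s) = dotH L [1]" using dotH_app_zeros by metis
  then show ?thesis unfolding dotH_def by simp
qed

lemma len_sum: "1 \<le> s \<Longrightarrow> (\<Sum>b\<in>Hs L s. len s b) = 1"
proof -
  assume s: "1 \<le> s"
  have fin: "finite (Hs L s)" "Hs L s \<noteq> {}" using Hs_finite u0_Hs[OF s] by auto
  have "(\<Sum>b\<in>Hs L s. len s b) = (\<Sum>b\<in>Hs L s. log \<psi> (dotH L (next_block L s b)) - log \<psi> (dotH L b))"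
    using len_eq[OF s] by simp
  also have "\<dots> = log \<psi> (dotH L (excl_block L s)) - log \<psi> (dotH L (Min (Hs L s)))"
    unfolding next_block_def by (rule telescope_next[OF fin])
  also have "\<dots> = 1" using dotH_excl Min_Hs[OF s] u0_dotH psi_pos psi_ne1 by simp
  finally show ?thesis .
qed

lemma cnt_sum: "(\<Sum>b\<in>Hs L s. cnt s b n) \<le> n"
proof -
  have "(\<Sum>b\<in>Hs L s. cnt s b n) = card (\<Union>b\<in>Hs L s. {k\<in>{1..n}. LB L s (K k) = Some b})"
    unfolding cnt_def by (rule card_UN_disjoint[symmetric]) (auto simp: Hs_finite)
  also have "\<dots> \<le> card {1..n}" by (intro card_mono) auto
  finally show ?thesis by simp
qed

lemma strong: "strong_benford L K"
  unfolding strong_benford_def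
proof (intro allI impI ballI)
  fix s b assume s: "1 \<le> s" and b: "b \<in> Hs L s"
  define B where "B = Hs L s"
  have fin: "finite B" unfolding B_def using Hs_finite by simp
  have bB: "b \<in> B" using b B_def by simp
  show "(\<lambda>n. real (card {k \<in> {1..n}. LB L s (K k) = Some b}) / real n) \<longlonglongrightarrow>
        log \<psi> (dotH L (next_block L s b) / dotH L b)"
    unfolding cnt_def[symmetric] len_def[symmetric]
  proof (rule LIMSEQ_I)
    fix e :: real assume e: "e > 0"
    define \<epsilon> where "\<epsilon> = e / (8 * (real (card B) + 1))"
    have eps: "\<epsilon> > 0" unfolding \<epsilon>_def using e by simp
    have ev: "eventually (\<lambda>n. \<forall>b'\<in>B. real (cnt s b' n) \<ge> real n * (len s b' - 4 * \<epsilon>)) sequentially"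
      using count_lower[OF s _ eps] fin unfolding B_def by (intro eventually_ball_finite) auto
    have ev1: "eventually (\<lambda>n. n \<ge> 1) sequentially" by (rule eventually_ge_at_top)
    obtain n0 where n0: "\<And>n. n \<ge> n0 \<Longrightarrow> (\<forall>b'\<in>B. real (cnt s b' n) \<ge> real n * (len s b' - 4 * \<epsilon>)) \<and> n \<ge> 1"
      using eventually_conj[OF ev ev1] unfolding eventually_sequentially by blast
    show "\<exists>no. \<forall>n\<ge>no. norm (real (cnt s b n) / real n - len s b) < e"
    proof (intro exI[of _ n0] allI impI)
      fix n assume n: "n \<ge> n0"
      have low: "\<forall>b'\<in>B. real (cnt s b' n) \<ge> real n * (len s b' - 4 * \<epsilon>)" and n1: "n \<ge> 1" using n0[OF n] by auto
      have rn: "real n > 0" using n1 by simp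
      have sumB: "(\<Sum>b'\<in>B. len s b') = 1" using len_sum[OF s] B_def by simp
      have S1: "(\<Sum>b'\<in>B. real (cnt s b' n)) \<le> real n" using cnt_sum[of s n] unfolding B_def by (metis of_nat_le_iff of_nat_sum)
      have S2: "(\<Sum>b'\<in>B. real (cnt s b' n)) = real (cnt s b n) + (\<Sum>b'\<in>B - {b}. real (cnt s b' n))"
        using fin bB by (simp add: sum.remove)
      have S3: "(\<Sum>b'\<in>B - {b}. real (cnt s b' n)) \<ge> (\<Sum>b'\<in>B - {b}. real n * (len s b' - 4 * \<epsilon>))"
        using low by (intro sum_mono) auto
      have S4: "(\<Sum>b'\<in>B - {b}. real n * (len s b' - 4 * \<epsilon>)) = real n * ((1 - len s b) - 4 * \<epsilon> * real (card B - 1))"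
      proof -
        have "(\<Sum>b'\<in>B - {b}. len s b') = 1 - len s b" using sumB fin bB by (simp add: sum.remove)
        moreover have "card (B - {b}) = card B - 1" using fin bB by simp
        ultimately show ?thesis by (simp add: sum_distrib_left[symmetric] sum_subtractf)
      qed
      have cB: "real (card B - 1) \<le> real (card B)" by simp
      have up: "real (cnt s b n) \<le> real n * (len s b + 4 * \<epsilon> * real (card B))"
      proof -
        have "real (cnt s b n) \<le> real n - real n * ((1 - len s b) - 4 * \<epsilon> * real (card B - 1))"
          using S1 S2 S3 S4 by linarith
        also have "\<dots> = real n * (len s b + 4 * \<epsilon> * real (card B - 1))" by (simp add: algebra_simps)
        also have "\<dots> \<le> real n * (len s b + 4 * \<epsilon> * real (card B))" using eps rn cB by (intro mult_left_mono) auto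
        finally show ?thesis .
      qed
      have lo: "real (cnt s b n) \<ge> real n * (len s b - 4 * \<epsilon>)" using low bB by auto
      have "4 * \<epsilon> * real (card B) < e"
      proof -
        have "4 * \<epsilon> * real (card B) = e * (4 * real (card B)) / (8 * (real (card B) + 1))" unfolding \<epsilon>_def by simp
        also have "\<dots> < e"
        proof -
          have "e * (4 * real (card B)) < e * (8 * (real (card B) + 1))" using e by simp
          then show ?thesis by (simp add: divide_less_eq)
        qed
        finally show ?thesis .
      qed
      moreover have "4 * \<epsilon> \<le> 4 * \<epsilon> * real (card B) \<or> True" by simp
      moreover have "4 * \<epsilon> < e"
      proof -
        have "4 * \<epsilon> = e * 4 / (8 * (real (card B) + 1))" unfolding \<epsilon>_def by simp
        also have "\<dots> < e"
        proof -
          have "e * 4 < e * (8 * (real (card B) + 1))" using e by simp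
          then show ?thesis by (simp add: divide_less_eq)
        qed
        finally show ?thesis .
      qed
      moreover have "real (cnt s b n) / real n \<le> len s b + 4 * \<epsilon> * real (card B)" using up rn by (simp add: divide_le_eq mult.commute)
      moreover have "real (cnt s b n) / real n \<ge> len s b - 4 * \<epsilon>" using lo rn by (simp add: le_divide_eq mult.commute)
      ultimately show "norm (real (cnt s b n) / real n - len s b) < e" by (simp add: abs_less_iff)
    qed
  qed
qed

end

theorem theorem6p16:
  fixes \<gamma> :: real
  assumes "\<gamma> > 1"
    and "\<forall>L. admissible L \<longrightarrow> (\<forall>r::rat. \<gamma> \<noteq> psiL L powr (of_rat r))"
  shows "absolute_benford (\<lambda>n. nat \<lfloor>\<gamma> ^ n\<rfloor>)"
  unfolding absolute_benford_def
proof (intro allI impI)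
  fix L assume L: "admissible L"
  interpret adm L by unfold_locales (rule L)
  have "log \<psi> \<gamma> \<notin> \<rat>"
  proof
    assume "log \<psi> \<gamma> \<in> \<rat>"
    then obtain r where r: "log \<psi> \<gamma> = of_rat r" by (auto elim: Rats_cases)
    have "\<psi> powr (log \<psi> \<gamma>) = \<gamma>" using assms(1) psi_gt1 by (intro powr_log_cancel) auto
    then have "\<gamma> = \<psi> powr (of_rat r)" using r by simp
    then show False using assms(2) L by blast
  qed
  then interpret mainloc L \<gamma> using assms(1) by unfold_locales auto
  show "strong_benford L (\<lambda>n. nat \<lfloor>\<gamma> ^ n\<rfloor>)" using strong unfolding K_def[abs_def] .
qed


end
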